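(* A nonnegative matrix $M\in\mathbb{R}_+^{p\times q}$ with $\operatorname{rank}(M)\ge 2$ is a slack matrix of some polytope if and only if $M_{\mathrm{inc}}$ is an incidence matrix of some $(\operatorname{rank}(M)-1)$-dimensional polytope and the all-ones vector $\mathbb{1}\in\mathbb{R}^p$ is contained in the column span of $M$.
   Context: For a polytope $P\subseteq\mathbb{R}^n$ with $\dim(P)\ge 1$, a slack matrix of $P$ is any matrix $S=[\mathbb{1},V]\cdot[w,-W]^T\in\mathbb{R}^{p\times q}$ (so $S_{ij}=w_j-W_jv_i$, with $v_i$ the $i$th row of $V$ and $W_j$ the $j$th row of $W$), where $V\in\mathbb{R}^{p\times n}$ satisfies $P=\operatorname{conv}(\text{rows of }V)$ and $W\in\mathbb{R}^{q\times n}$, $w\in\mathbb{R}^q$ satisfy $P=\{x\in\mathbb{R}^n: Wx\le w\}$. For a matrix $M$, $M_{\mathrm{inc}}$ is the $0/1$-matrix with $(M_{\mathrm{inc}})_{ij}=1$ iff $M_{ij}=0$. An incidence matrix of a polytope $P$ is a matrix $S_{\mathrm{inc}}$ for some slack matrix $S$ of $P$. *)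

theory Defs
  imports "HOL-Analysis.Analysis"
begin

text \<open>Points of R^n are represented as functions nat => real that vanish at
  all coordinates k >= n.  Matrices whose row/column counts are the fixed
  sizes p, q of the statement are represented as real^'q^'p (rows indexed by
  the finite type 'p, columns by 'q).  A point configuration V in R^(p x n) is
  a function 'p => nat => real (only coordinates k < n are used), an
  inequality system W x <= w with q rows is W :: 'q => nat => real together
  with w :: 'q => real.\<close>

definition Rn :: "nat \<Rightarrow> (nat \<Rightarrow> real) set" where
  "Rn n = {x. \<forall>k\<ge>n. x k = 0}"

definition conv_rows :: "nat \<Rightarrow> ('p::finite \<Rightarrow> nat \<Rightarrow> real) \<Rightarrow> (nat \<Rightarrow> real) set" where
  "conv_rows n V = {x \<in> Rn n. \<exists>l :: 'p \<Rightarrow> real. (\<forall>i. l i \<ge> 0) \<and> (\<Sum>i\<in>UNIV. l i) = 1 \<and>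
       (\<forall>k<n. x k = (\<Sum>i\<in>UNIV. l i * V i k))}"

definition ineq_set :: "nat \<Rightarrow> ('q::finite \<Rightarrow> nat \<Rightarrow> real) \<Rightarrow> ('q \<Rightarrow> real) \<Rightarrow> (nat \<Rightarrow> real) set" where
  "ineq_set n W w = {x \<in> Rn n. \<forall>j. (\<Sum>k<n. W j k * x k) \<le> w j}"

definition aff_indep_pts :: "nat \<Rightarrow> nat \<Rightarrow> (nat \<Rightarrow> nat \<Rightarrow> real) \<Rightarrow> bool" where
  "aff_indep_pts n d y \<longleftrightarrow> (\<forall>c :: nat \<Rightarrow> real.
      (\<forall>k<n. (\<Sum>i\<in>{1..d}. c i * (y i k - y 0 k)) = 0) \<longrightarrow> (\<forall>i\<in>{1..d}. c i = 0))"

definition set_dim :: "nat \<Rightarrow> (nat \<Rightarrow> real) set \<Rightarrow> nat" where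
  "set_dim n P = (GREATEST d. \<exists>y. (\<forall>i\<le>d. y i \<in> P) \<and> aff_indep_pts n d y)"

definition slack_matrix_of :: "nat \<Rightarrow> (nat \<Rightarrow> real) set \<Rightarrow> real^'q^'p \<Rightarrow> bool" where
  "slack_matrix_of n P S \<longleftrightarrow> set_dim n P \<ge> 1 \<and>
     (\<exists>(V :: 'p \<Rightarrow> nat \<Rightarrow> real) (W :: 'q \<Rightarrow> nat \<Rightarrow> real) (w :: 'q \<Rightarrow> real).
        P = conv_rows n V \<and> P = ineq_set n W w \<and>
        (\<forall>i j. S $ i $ j = w j - (\<Sum>k<n. W j k * V i k)))"

definition is_slack_matrix :: "real^'q^'p \<Rightarrow> bool" where
  "is_slack_matrix S \<longleftrightarrow> (\<exists>n P. slack_matrix_of n P S)"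

definition inc_mat :: "real^'q^'p \<Rightarrow> real^'q^'p" where
  "inc_mat M = (\<chi> i j. if M $ i $ j = 0 then 1 else 0)"

definition is_incidence_matrix_dim :: "nat \<Rightarrow> real^'q^'p \<Rightarrow> bool" where
  "is_incidence_matrix_dim d N \<longleftrightarrow>
     (\<exists>n P (S :: real^'q^'p). slack_matrix_of n P S \<and> set_dim n P = d \<and> N = inc_mat S)"

end

theory Submission
  imports Defs
begin

lemma conv_idx:
  fixes f :: "'i \<Rightarrow> 'a::real_vector"
  assumes "finite I"
  shows "convex hull (f`I) = {y. \<exists>l. (\<forall>i\<in>I. 0 \<le> l i) \<and> sum l I = 1 \<and> (\<Sum>i\<in>I. l i *\<^sub>R f i) = y}"
proof (intro set_eqI iffI)
  fix y assume "y \<in> convex hull (f`I)"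
  then obtain u where u: "\<forall>x\<in>f`I. 0 \<le> u x" "sum u (f`I) = 1" "(\<Sum>x\<in>f`I. u x *\<^sub>R x) = y"
    using convex_hull_finite[of "f`I"] assms by auto
  define l where "l i = u (f i) / card {k\<in>I. f k = f i}" for i
  have cpos: "card {k\<in>I. f k = f i} > 0" if "i\<in>I" for i
    using that assms by (subst card_gt_0_iff) auto
  have fib: "(\<Sum>k\<in>{k\<in>I. f k = x}. g k) = real (card {k\<in>I. f k = x}) * c" 
    if "\<And>k. k\<in>I \<Longrightarrow> f k = x \<Longrightarrow> g k = c" for g :: "'i \<Rightarrow> real" and x c
    using that by simp
  have "sum l I = (\<Sum>x\<in>f`I. sum l {k\<in>I. f k = x})"
    using sum.image_gen[OF assms, of l f] by simp
  also have "\<dots> = (\<Sum>x\<in>f`I. u x)"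
  proof (rule sum.cong[OF refl])
    fix x assume "x \<in> f`I"
    then obtain i where i: "i\<in>I" "f i = x" by auto
    have "sum l {k\<in>I. f k = x} = (\<Sum>k\<in>{k\<in>I. f k = x}. u x / card {k\<in>I. f k = x})"
      by (rule sum.cong) (auto simp: l_def)
    also have "\<dots> = u x" using cpos[OF i(1)] i by simp
    finally show "sum l {k\<in>I. f k = x} = u x" .
  qed
  finally have s1: "sum l I = 1" using u by simp
  have "(\<Sum>i\<in>I. l i *\<^sub>R f i) = (\<Sum>x\<in>f`I. (\<Sum>k\<in>{k\<in>I. f k = x}. l k *\<^sub>R f k))"
    using sum.image_gen[OF assms, of "\<lambda>i. l i *\<^sub>R f i" f] by simp
  also have "\<dots> = (\<Sum>x\<in>f`I. u x *\<^sub>R x)"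
  proof (rule sum.cong[OF refl])
    fix x assume "x \<in> f`I"
    then obtain i where i: "i\<in>I" "f i = x" by auto
    have "(\<Sum>k\<in>{k\<in>I. f k = x}. l k *\<^sub>R f k) = (\<Sum>k\<in>{k\<in>I. f k = x}. (u x / card {k\<in>I. f k = x}) *\<^sub>R x)"
      by (rule sum.cong) (auto simp: l_def)
    also have "\<dots> = u x *\<^sub>R x" using cpos[OF i(1)] i by (simp add: scaleR_sum_left[symmetric])
    finally show "(\<Sum>k\<in>{k\<in>I. f k = x}. l k *\<^sub>R f k) = u x *\<^sub>R x" .
  qed
  finally have "(\<Sum>i\<in>I. l i *\<^sub>R f i) = y" using u by simp
  moreover have "\<forall>i\<in>I. 0 \<le> l i" using u by (auto simp: l_def)
  ultimately show "y \<in> {y. \<exists>l. (\<forall>i\<in>I. 0 \<le> l i) \<and> sum l I = 1 \<and> (\<Sum>i\<in>I. l i *\<^sub>R f i) = y}"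
    using s1 by blast
next
  fix y assume "y \<in> {y. \<exists>l. (\<forall>i\<in>I. 0 \<le> l i) \<and> sum l I = 1 \<and> (\<Sum>i\<in>I. l i *\<^sub>R f i) = y}"
  then obtain l where l: "\<forall>i\<in>I. 0 \<le> l i" "sum l I = 1" "(\<Sum>i\<in>I. l i *\<^sub>R f i) = y" by auto
  show "y \<in> convex hull (f`I)"
    unfolding l(3)[symmetric]
    by (rule convex_sum[OF assms convex_convex_hull l(2)]) (use l(1) in \<open>auto intro: hull_inc\<close>)
qed


lemma aff_idx:
  fixes f :: "'i \<Rightarrow> 'a::real_vector"
  assumes "finite I"
  shows "affine hull (f`I) = {y. \<exists>l. sum l I = 1 \<and> (\<Sum>i\<in>I. l i *\<^sub>R f i) = y}"
proof (intro set_eqI iffI)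
  fix y assume "y \<in> affine hull (f`I)"
  then obtain u where u: "sum u (f`I) = 1" "(\<Sum>x\<in>f`I. u x *\<^sub>R x) = y"
    using affine_hull_finite[of "f`I"] assms by auto
  define l where "l i = u (f i) / card {k\<in>I. f k = f i}" for i
  have cpos: "card {k\<in>I. f k = f i} > 0" if "i\<in>I" for i
    using that assms by (subst card_gt_0_iff) auto
  have "sum l I = (\<Sum>x\<in>f`I. sum l {k\<in>I. f k = x})"
    using sum.image_gen[OF assms, of l f] by simp
  also have "\<dots> = (\<Sum>x\<in>f`I. u x)"
  proof (rule sum.cong[OF refl])
    fix x assume "x \<in> f`I"
    then obtain i where i: "i\<in>I" "f i = x" by auto
    have "sum l {k\<in>I. f k = x} = (\<Sum>k\<in>{k\<in>I. f k = x}. u x / card {k\<in>I. f k = x})"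
      by (rule sum.cong) (auto simp: l_def)
    also have "\<dots> = u x" using cpos[OF i(1)] i by simp
    finally show "sum l {k\<in>I. f k = x} = u x" .
  qed
  finally have s1: "sum l I = 1" using u by simp
  have "(\<Sum>i\<in>I. l i *\<^sub>R f i) = (\<Sum>x\<in>f`I. (\<Sum>k\<in>{k\<in>I. f k = x}. l k *\<^sub>R f k))"
    using sum.image_gen[OF assms, of "\<lambda>i. l i *\<^sub>R f i" f] by simp
  also have "\<dots> = (\<Sum>x\<in>f`I. u x *\<^sub>R x)"
  proof (rule sum.cong[OF refl])
    fix x assume "x \<in> f`I"
    then obtain i where i: "i\<in>I" "f i = x" by auto
    have "(\<Sum>k\<in>{k\<in>I. f k = x}. l k *\<^sub>R f k) = (\<Sum>k\<in>{k\<in>I. f k = x}. (u x / card {k\<in>I. f k = x}) *\<^sub>R x)"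
      by (rule sum.cong) (auto simp: l_def)
    also have "\<dots> = u x *\<^sub>R x" using cpos[OF i(1)] i by (simp add: scaleR_sum_left[symmetric])
    finally show "(\<Sum>k\<in>{k\<in>I. f k = x}. l k *\<^sub>R f k) = u x *\<^sub>R x" .
  qed
  finally have "(\<Sum>i\<in>I. l i *\<^sub>R f i) = y" using u by simp
  then show "y \<in> {y. \<exists>l. sum l I = 1 \<and> (\<Sum>i\<in>I. l i *\<^sub>R f i) = y}"
    using s1 by blast
next
  fix y assume "y \<in> {y. \<exists>l. sum l I = 1 \<and> (\<Sum>i\<in>I. l i *\<^sub>R f i) = y}"
  then obtain l where l: "sum l I = 1" "(\<Sum>i\<in>I. l i *\<^sub>R f i) = y" by auto
  have "(\<Sum>i\<in>I. l i *\<^sub>R f i) = (\<Sum>x\<in>f`I. (\<Sum>k\<in>{k\<in>I. f k = x}. l k *\<^sub>R f k))"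
    using sum.image_gen[OF assms, of "\<lambda>i. l i *\<^sub>R f i" f] by simp
  also have "\<dots> = (\<Sum>x\<in>f`I. (\<Sum>k\<in>{k\<in>I. f k = x}. l k) *\<^sub>R x)"
    by (rule sum.cong[OF refl]) (auto simp: scaleR_sum_left intro!: sum.cong)
  finally have e: "y = (\<Sum>x\<in>f`I. (\<Sum>k\<in>{k\<in>I. f k = x}. l k) *\<^sub>R x)" using l by simp
  have "(\<Sum>x\<in>f`I. (\<Sum>k\<in>{k\<in>I. f k = x}. l k)) = 1"
    using sum.image_gen[OF assms, of l f] l by simp
  then show "y \<in> affine hull (f`I)"
    using affine_hull_finite[of "f`I"] assms e by auto
qed

lemma ins_image: "insert a (f`I) = (case_option a f) ` (insert None (Some`I))"
  by (simp add: image_image)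

lemma sum_ins_None:
  assumes "finite I"
  shows "(\<Sum>k\<in>insert None (Some`I). h k) = h None + (\<Sum>i\<in>I. h (Some i))"
proof -
  have "None \<notin> Some ` I" by auto
  then have "(\<Sum>k\<in>insert None (Some`I). h k) = h None + (\<Sum>k\<in>Some`I. h k)"
    using assms by (simp add: sum.insert)
  also have "(\<Sum>k\<in>Some`I. h k) = (\<Sum>i\<in>I. h (Some i))"
    by (rule sum.reindex[unfolded comp_def]) (simp add: inj_on_def)
  finally show ?thesis .
qed

lemma conv_ins_idx:
  fixes f :: "'i \<Rightarrow> 'a::real_vector"
  assumes "finite I"
  shows "convex hull (insert a (f`I)) = {y. \<exists>c l. 0 \<le> c \<and> (\<forall>i\<in>I. 0 \<le> l i) \<and> c + sum l I = 1 \<and> c *\<^sub>R a + (\<Sum>i\<in>I. l i *\<^sub>R f i) = y}"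
proof -
  have fin: "finite (insert None (Some`I))" using assms by auto
  note sr = sum_ins_None[OF assms]
  show ?thesis
  proof (intro set_eqI iffI)
    fix y assume "y \<in> convex hull (insert a (f`I))"
    then have "y \<in> convex hull (case_option a f ` (insert None (Some`I)))" by (simp only: ins_image[of a f I, symmetric])
    then obtain L where L: "\<forall>k\<in>insert None (Some`I). 0 \<le> L k" "sum L (insert None (Some`I)) = 1"
      "(\<Sum>k\<in>insert None (Some`I). L k *\<^sub>R case_option a f k) = y"
      unfolding conv_idx[OF fin] mem_Collect_eq by blast
    have "0 \<le> L None" "\<forall>i\<in>I. 0 \<le> L (Some i)" using L(1) by auto
    moreover have "L None + sum (\<lambda>i. L (Some i)) I = 1" using L(2) unfolding sr .
    moreover have "L None *\<^sub>R a + (\<Sum>i\<in>I. L (Some i) *\<^sub>R f i) = y" using L(3) unfolding sr by simp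
    ultimately show "y \<in> {y. \<exists>c l. 0 \<le> c \<and> (\<forall>i\<in>I. 0 \<le> l i) \<and> c + sum l I = 1 \<and> c *\<^sub>R a + (\<Sum>i\<in>I. l i *\<^sub>R f i) = y}"
      by (intro CollectI exI[where x="L None"] exI[where x="\<lambda>i. L (Some i)"] conjI)
  next
    fix y assume "y \<in> {y. \<exists>c l. 0 \<le> c \<and> (\<forall>i\<in>I. 0 \<le> l i) \<and> c + sum l I = 1 \<and> c *\<^sub>R a + (\<Sum>i\<in>I. l i *\<^sub>R f i) = y}"
    then obtain c l where cl: "0 \<le> c" "\<forall>i\<in>I. 0 \<le> l i" "c + sum l I = 1" "c *\<^sub>R a + (\<Sum>i\<in>I. l i *\<^sub>R f i) = y" by blast
    define L where "L = case_option c l"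
    have "\<forall>k\<in>insert None (Some`I). 0 \<le> L k" using cl by (auto simp: L_def)
    moreover have "sum L (insert None (Some`I)) = 1" unfolding sr using cl by (simp add: L_def)
    moreover have "(\<Sum>k\<in>insert None (Some`I). L k *\<^sub>R case_option a f k) = y" unfolding sr using cl by (simp add: L_def)
    ultimately have "y \<in> convex hull (case_option a f ` (insert None (Some`I)))"
      unfolding conv_idx[OF fin] by blast
    then show "y \<in> convex hull (insert a (f`I))" by (simp only: ins_image[of a f I, symmetric])
  qed
qed

lemma aff_ins_idx:
  fixes f :: "'i \<Rightarrow> 'a::real_vector"
  assumes "finite I"
  shows "affine hull (insert a (f`I)) = {y. \<exists>c l. c + sum l I = 1 \<and> c *\<^sub>R a + (\<Sum>i\<in>I. l i *\<^sub>R f i) = y}"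
proof -
  have fin: "finite (insert None (Some`I))" using assms by auto
  note sr = sum_ins_None[OF assms]
  show ?thesis
  proof (intro set_eqI iffI)
    fix y assume "y \<in> affine hull (insert a (f`I))"
    then have "y \<in> affine hull (case_option a f ` (insert None (Some`I)))" by (simp only: ins_image[of a f I, symmetric])
    then obtain L where L: "sum L (insert None (Some`I)) = 1"
      "(\<Sum>k\<in>insert None (Some`I). L k *\<^sub>R case_option a f k) = y"
      unfolding aff_idx[OF fin] mem_Collect_eq by blast
    have "L None + sum (\<lambda>i. L (Some i)) I = 1" using L(1) unfolding sr .
    moreover have "L None *\<^sub>R a + (\<Sum>i\<in>I. L (Some i) *\<^sub>R f i) = y" using L(2) unfolding sr by simp
    ultimately show "y \<in> {y. \<exists>c l. c + sum l I = 1 \<and> c *\<^sub>R a + (\<Sum>i\<in>I. l i *\<^sub>R f i) = y}"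
      by (intro CollectI exI[where x="L None"] exI[where x="\<lambda>i. L (Some i)"] conjI)
  next
    fix y assume "y \<in> {y. \<exists>c l. c + sum l I = 1 \<and> c *\<^sub>R a + (\<Sum>i\<in>I. l i *\<^sub>R f i) = y}"
    then obtain c l where cl: "c + sum l I = 1" "c *\<^sub>R a + (\<Sum>i\<in>I. l i *\<^sub>R f i) = y" by blast
    define L where "L = case_option c l"
    have "sum L (insert None (Some`I)) = 1" unfolding sr using cl by (simp add: L_def)
    moreover have "(\<Sum>k\<in>insert None (Some`I). L k *\<^sub>R case_option a f k) = y" unfolding sr using cl by (simp add: L_def)
    ultimately have "y \<in> affine hull (case_option a f ` (insert None (Some`I)))"
      unfolding aff_idx[OF fin] by blast
    then show "y \<in> affine hull (insert a (f`I))" by (simp only: ins_image[of a f I, symmetric])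
  qed
qed


definition ev :: "'q set \<Rightarrow> real^'q" where "ev T = (\<chi> j. if j \<in> T then 1 else 0)"

lemma ev_inner: "ev T \<bullet> (x::real^'q::finite) = (\<Sum>j\<in>T. x$j)"
proof -
  have "ev T \<bullet> x = (\<Sum>j\<in>UNIV. (if j \<in> T then x$j else 0))"
    by (auto simp: ev_def inner_vec_def intro!: sum.cong)
  also have "\<dots> = (\<Sum>j\<in>T. x$j)"
    by (simp add: sum.If_cases)
  finally show ?thesis .
qed

lemma ev_nonneg: "(\<forall>j\<in>T. 0 \<le> (x::real^'q::finite)$j) \<Longrightarrow> 0 \<le> ev T \<bullet> x"
  by (simp add: ev_inner sum_nonneg)

lemma ev_zero_iff: "(\<forall>j\<in>T. 0 \<le> (x::real^'q::finite)$j) \<Longrightarrow> ev T \<bullet> x = 0 \<longleftrightarrow> (\<forall>j\<in>T. x$j = 0)"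
  by (simp add: ev_inner sum_nonneg_eq_0_iff)

lemma aff_in_hyp:
  assumes "\<forall>i\<in>I. e \<bullet> f i = b" "y \<in> affine hull (f`I)"
  shows "e \<bullet> y = (b::real)"
proof -
  have "affine hull (f`I) \<subseteq> {x. e \<bullet> x = b}"
    by (rule hull_minimal) (use assms(1) in \<open>auto simp: affine_hyperplane\<close>)
  then show ?thesis using assms(2) by auto
qed

lemma H1:
  fixes f :: "'i \<Rightarrow> 'a::real_inner"
  assumes "finite I" "e \<bullet> a = 0" "\<forall>i\<in>I. e \<bullet> f i = 1" "x \<in> affine hull (insert a (f`I))"
    "e \<bullet> x = 0" "q \<in> affine hull (f`I)"
  shows "q + (x - a) \<in> affine hull (f`I)"
proof -
  obtain c l where cl: "c + sum l I = 1" "x = c *\<^sub>R a + (\<Sum>i\<in>I. l i *\<^sub>R f i)"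
    using assms(4) unfolding aff_ins_idx[OF assms(1)] by auto
  obtain m where m: "sum m I = 1" "q = (\<Sum>i\<in>I. m i *\<^sub>R f i)"
    using assms(6) unfolding aff_idx[OF assms(1)] by auto
  have "e \<bullet> x = sum l I"
    using assms(2,3) by (simp add: cl(2) inner_sum_right inner_add_right)
  then have c1: "c = 1" using assms(5) cl(1) by simp
  have "q + (x - a) = (\<Sum>i\<in>I. (m i + l i) *\<^sub>R f i)"
    by (simp add: m(2) cl(2) c1 scaleR_add_left sum.distrib)
  moreover have "sum (\<lambda>i. m i + l i) I = 1" using m(1) cl(1) c1 by (simp add: sum.distrib)
  ultimately show ?thesis unfolding aff_idx[OF assms(1)]
    by (intro CollectI exI[where x="\<lambda>i. m i + l i"] conjI) auto
qed

lemma H2: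
  fixes f :: "'i \<Rightarrow> 'a::real_inner"
  assumes "finite I" "e \<bullet> a = 0" "\<forall>i\<in>I. e \<bullet> f i = 1" "x \<in> affine hull (insert a (f`I))"
    "e \<bullet> x = t" "t \<noteq> 0"
  shows "a + (1/t) *\<^sub>R (x - a) \<in> affine hull (f`I)"
proof -
  obtain c l where cl: "c + sum l I = 1" "x = c *\<^sub>R a + (\<Sum>i\<in>I. l i *\<^sub>R f i)"
    using assms(4) unfolding aff_ins_idx[OF assms(1)] by auto
  have "e \<bullet> x = sum l I"
    using assms(2,3) by (simp add: cl(2) inner_sum_right inner_add_right)
  then have st: "sum l I = t" using assms(5) by simp
  have "x - a = (\<Sum>i\<in>I. l i *\<^sub>R f i) - (1 - c) *\<^sub>R a"
    by (simp add: cl(2) algebra_simps)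
  also have "1 - c = t" using cl(1) st by simp
  finally have "a + (1/t) *\<^sub>R (x - a) = (1/t) *\<^sub>R (\<Sum>i\<in>I. l i *\<^sub>R f i)"
    using assms(6) by (simp add: scaleR_diff_right)
  then have "a + (1/t) *\<^sub>R (x - a) = (\<Sum>i\<in>I. (l i / t) *\<^sub>R f i)"
    by (simp add: scaleR_sum_right)
  moreover have "sum (\<lambda>i. l i / t) I = 1" unfolding sum_divide_distrib[symmetric] using st assms(6) by simp
  ultimately show ?thesis unfolding aff_idx[OF assms(1)]
    by (intro CollectI exI[where x="\<lambda>i. l i / t"] conjI) auto
qed

lemma H3:
  fixes g :: "'i \<Rightarrow> 'a::real_inner"
  assumes "finite I" "e \<bullet> a = 0" "\<forall>i\<in>I. e \<bullet> g i > 0" "z \<in> convex hull (insert a (g`I))"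
    "e \<bullet> z = t" "t > 0"
  shows "a + (1/t) *\<^sub>R (z - a) \<in> convex hull ((\<lambda>i. a + (1 / (e \<bullet> g i)) *\<^sub>R (g i - a))`I)"
proof -
  obtain c l where cl: "0 \<le> c" "\<forall>i\<in>I. 0 \<le> l i" "c + sum l I = 1" "z = c *\<^sub>R a + (\<Sum>i\<in>I. l i *\<^sub>R g i)"
    using assms(4) unfolding conv_ins_idx[OF assms(1)] by auto
  have cc: "c = 1 - sum l I" using cl(3) by simp
  have st: "(\<Sum>i\<in>I. l i * (e \<bullet> g i)) = t"
    using assms(2,5) by (simp add: cl(4) inner_sum_right inner_add_right)
  define mu where "mu i = l i * (e \<bullet> g i) / t" for i
  have mu0: "\<forall>i\<in>I. 0 \<le> mu i" using cl(2) assms(3,6) by (auto simp: mu_def)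
  have mu1: "sum mu I = 1" using st assms(6) by (simp add: mu_def sum_divide_distrib[symmetric])
  have "(\<Sum>i\<in>I. mu i *\<^sub>R (a + (1 / (e \<bullet> g i)) *\<^sub>R (g i - a)))
      = (\<Sum>i\<in>I. mu i *\<^sub>R a) + (\<Sum>i\<in>I. (l i / t) *\<^sub>R (g i - a))"
    unfolding sum.distrib[symmetric] scaleR_add_right
    by (rule sum.cong[OF refl]) (use assms(3) in \<open>auto simp: mu_def\<close>)
  also have "(\<Sum>i\<in>I. mu i *\<^sub>R a) = a"
    by (simp add: scaleR_sum_left[symmetric] mu1)
  also have "(\<Sum>i\<in>I. (l i / t) *\<^sub>R (g i - a)) = (\<Sum>i\<in>I. (1/t) *\<^sub>R (l i *\<^sub>R g i - l i *\<^sub>R a))"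
    by (rule sum.cong) (auto simp: scaleR_diff_right)
  also have "\<dots> = (1/t) *\<^sub>R ((\<Sum>i\<in>I. l i *\<^sub>R g i) - (\<Sum>i\<in>I. l i *\<^sub>R a))"
    by (simp add: scaleR_sum_right[symmetric] sum_subtractf)
  also have "(\<Sum>i\<in>I. l i *\<^sub>R a) = sum l I *\<^sub>R a"
    by (simp add: scaleR_sum_left)
  also have "(\<Sum>i\<in>I. l i *\<^sub>R g i) - sum l I *\<^sub>R a = z - a"
    unfolding cl(4) cc by (simp add: scaleR_diff_left)
  finally have "a + (1/t) *\<^sub>R (z - a) = (\<Sum>i\<in>I. mu i *\<^sub>R (a + (1 / (e \<bullet> g i)) *\<^sub>R (g i - a)))" by simp
  then show ?thesis
    unfolding conv_idx[OF assms(1)] using mu0 mu1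
    by (intro CollectI exI[where x=mu] conjI) auto
qed

lemma H4:
  fixes S :: "'a::euclidean_space set"
  assumes "finite S" "\<And>s. q + s *\<^sub>R d \<in> convex hull S"
  shows "d = 0"
proof (rule ccontr)
  assume d: "d \<noteq> 0"
  have "bounded (convex hull S)"
    using assms(1) by (simp add: compact_imp_bounded compact_convex_hull finite_imp_compact)
  then obtain B where B: "\<And>x. x \<in> convex hull S \<Longrightarrow> norm x \<le> B" unfolding bounded_iff by blast
  define s where "s = (B + norm q + 1) / norm d"
  have "norm q \<le> B" using B[OF assms(2)[of 0]] by simp
  then have B0: "B \<ge> 0" using norm_ge_zero[of q] by linarith
  have "norm (s *\<^sub>R d) = B + norm q + 1"
    using d B0 by (simp add: s_def abs_of_nonneg)
  moreover have "norm (s *\<^sub>R d) \<le> norm (q + s *\<^sub>R d) + norm q"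
    by (metis add_diff_cancel_left' norm_triangle_ineq4)
  ultimately show False using B[OF assms(2)[of s]] by linarith
qed

lemma small_pos:
  fixes a b :: "real^'q::finite"
  assumes "\<forall>j\<in>K. 0 < a$j"
  shows "\<exists>t>0. t \<le> 1 \<and> (\<forall>j\<in>K. 0 \<le> a$j + t * b$j)"
proof -
  define m where "m = Min (insert 1 ((\<lambda>j. a$j)`K))"
  have fin: "finite (insert 1 ((\<lambda>j. a$j)`K))" by simp
  have m0: "m > 0" unfolding m_def using assms fin by (subst Min_gr_iff) auto
  have m1: "m \<le> 1" unfolding m_def using fin by simp
  have ma: "m \<le> a$j" if "j\<in>K" for j unfolding m_def using fin that by simp
  define t where "t = m / (norm b + 1)"
  have t0: "t > 0" unfolding t_def by (rule divide_pos_pos[OF m0]) (simp add: add_nonneg_pos)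
  have nb: "0 \<le> norm b / (norm b + 1)" "norm b / (norm b + 1) \<le> 1"
    by (simp, smt (verit, best) divide_le_eq_1 norm_ge_zero)
  have "m * 1 \<le> m * (norm b + 1)" by (rule mult_left_mono) (use m0 in auto)
  then have "t \<le> m" unfolding t_def using m0 by (simp add: divide_le_eq add_nonneg_pos)
  then have t1: "t \<le> 1" using m1 by simp
  have "0 \<le> a$j + t * b$j" if "j\<in>K" for j
  proof -
    have "\<bar>b$j\<bar> \<le> norm b" by (rule component_le_norm_cart)
    then have "t * \<bar>b$j\<bar> \<le> t * norm b" using t0 by simp
    also have "t * norm b = m * (norm b / (norm b + 1))" by (simp add: t_def)
    also have "\<dots> \<le> m * 1" by (rule mult_left_mono) (use m0 nb in auto)
    finally have "t * \<bar>b$j\<bar> \<le> a$j" using ma[OF that] by simp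
    moreover have "- (t * \<bar>b$j\<bar>) \<le> t * b$j" using t0 by (simp add: abs_if)
    ultimately show ?thesis by linarith
  qed
  then show ?thesis using t0 t1 by blast
qed


definition hypC :: "'p::finite set \<Rightarrow> 'q::finite set \<Rightarrow> ('p \<Rightarrow> real^'q) \<Rightarrow> ('p \<Rightarrow> real^'q) \<Rightarrow> bool" where
  "hypC I C X Y \<longleftrightarrow> I \<noteq> {} \<and>
     (\<forall>i\<in>I. \<forall>j\<in>C. 0 \<le> X i $ j \<and> 0 \<le> Y i $ j \<and> (X i $ j = 0 \<longleftrightarrow> Y i $ j = 0)) \<and>
     aff_dim (X`I) \<le> aff_dim (Y`I) \<and>
     convex hull (Y`I) = {y \<in> affine hull (Y`I). \<forall>j\<in>C. 0 \<le> y $ j}"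

definition Vx :: "'p set \<Rightarrow> ('p \<Rightarrow> real^'q::finite) \<Rightarrow> 'p set" where
  "Vx I Y = {i\<in>I. Y i extreme_point_of convex hull (Y`I)}"

definition conclC :: "'p::finite set \<Rightarrow> 'q::finite set \<Rightarrow> ('p \<Rightarrow> real^'q) \<Rightarrow> ('p \<Rightarrow> real^'q) \<Rightarrow> bool" where
  "conclC I C X Y \<longleftrightarrow>
     convex hull (X`I) = {x \<in> affine hull (X`I). \<forall>j\<in>C. 0 \<le> x $ j} \<and>
     aff_dim (X`I) = aff_dim (Y`I) \<and>
     convex hull (X`I) = convex hull (X`Vx I Y) \<and>
     (\<forall>u\<in>Vx I Y. \<forall>x\<in>affine hull (X`I). (\<forall>j\<in>C. Y u $ j = 0 \<longrightarrow> x $ j = 0) \<longrightarrow> x = X u)"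

definition qf :: "real^'q::finite \<Rightarrow> ('p \<Rightarrow> real^'q) \<Rightarrow> 'p \<Rightarrow> 'p \<Rightarrow> real^'q" where
  "qf e Z u i = Z u + (1 / (e \<bullet> Z i)) *\<^sub>R (Z i - Z u)"

lemma convex_nonneg: "convex {y::real^'q::finite. \<forall>j\<in>T. 0 \<le> y$j}"
  unfolding convex_def by (auto intro!: add_nonneg_nonneg mult_nonneg_nonneg)

lemma hull_eqI:
  assumes "A \<subseteq> P hull B" "B \<subseteq> P hull A" "P (P hull A)" "P (P hull B)"
  shows "P hull A = P hull B"
  using assms by (metis hull_minimal subset_antisym)

locale stepctx =
  fixes I :: "'p::finite set" and C :: "'q::finite set" and X Y :: "'p \<Rightarrow> real^'q" and u :: 'p
  assumes hyp: "hypC I C X Y" and uV: "u \<in> Vx I Y" and dpos: "aff_dim (Y`I) \<ge> 1"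
begin

definition "T = {j\<in>C. Y u $ j = 0}"
definition "e = ev T"
definition "I' = {i\<in>I. e \<bullet> Y i \<noteq> 0}"
definition "qX = qf e X u"
definition "qY = qf e Y u"

lemma finI: "finite I" by simp
lemma uI: "u \<in> I" using uV by (simp add: Vx_def)
lemma uext: "Y u extreme_point_of convex hull (Y`I)" using uV by (simp add: Vx_def)
lemma Inz: "I \<noteq> {}" using hyp by (simp add: hypC_def)
lemma nnX: "i\<in>I \<Longrightarrow> j\<in>C \<Longrightarrow> 0 \<le> X i $ j" using hyp by (simp add: hypC_def)
lemma nnY: "i\<in>I \<Longrightarrow> j\<in>C \<Longrightarrow> 0 \<le> Y i $ j" using hyp by (simp add: hypC_def)
lemma patt: "i\<in>I \<Longrightarrow> j\<in>C \<Longrightarrow> X i $ j = 0 \<longleftrightarrow> Y i $ j = 0" using hyp by (simp add: hypC_def)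
lemma dimXY: "aff_dim (X`I) \<le> aff_dim (Y`I)" using hyp by (simp add: hypC_def)
lemma QY: "convex hull (Y`I) = {y \<in> affine hull (Y`I). \<forall>j\<in>C. 0 \<le> y $ j}" using hyp by (simp add: hypC_def)

lemma TC: "T \<subseteq> C" by (auto simp: T_def)
lemma YuT: "j\<in>T \<Longrightarrow> Y u $ j = 0" by (simp add: T_def)
lemma XuT: "j\<in>T \<Longrightarrow> X u $ j = 0" using patt[OF uI] by (simp add: T_def)
lemma Yupos: "j\<in>C - T \<Longrightarrow> 0 < Y u $ j" using nnY[OF uI] by (force simp: T_def)
lemma eYu: "e \<bullet> Y u = 0" by (simp add: e_def ev_inner YuT)
lemma eXu: "e \<bullet> X u = 0" by (simp add: e_def ev_inner XuT)

lemma QY_nn: "y \<in> convex hull (Y`I) \<Longrightarrow> j \<in> C \<Longrightarrow> 0 \<le> y $ j" using QY by auto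
lemma QY_e: "y \<in> convex hull (Y`I) \<Longrightarrow> 0 \<le> e \<bullet> y"
  unfolding e_def by (rule ev_nonneg) (use QY_nn TC in auto)

lemma Y2:
  assumes y: "y \<in> convex hull (Y`I)" and yT: "\<forall>j\<in>T. y $ j = 0"
  shows "y = Y u"
proof (rule ccontr)
  assume ne: "y \<noteq> Y u"
  obtain t where t: "t > 0" "t \<le> 1" "\<forall>j\<in>C - T. 0 \<le> Y u $ j + t * (Y u - y) $ j"
    using small_pos[of "C - T" "Y u" "Y u - y"] Yupos by blast
  define z where "z = (1 + t) *\<^sub>R Y u + (- t) *\<^sub>R y"
  have Yuh: "Y u \<in> affine hull (Y`I)" using uI by (simp add: hull_inc)
  have yh: "y \<in> affine hull (Y`I)" using y convex_hull_subset_affine_hull by blast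
  have "z \<in> affine hull (Y`I)" unfolding z_def
    by (rule mem_affine[OF affine_affine_hull Yuh yh]) simp
  moreover have "0 \<le> z $ j" if "j \<in> C" for j
  proof (cases "j \<in> T")
    case True then show ?thesis using YuT yT by (simp add: z_def)
  next
    case False then show ?thesis using t(3) that by (simp add: z_def algebra_simps)
  qed
  ultimately have zQ: "z \<in> convex hull (Y`I)" using QY by auto
  have "Y u \<in> open_segment z y"
  proof -
    have "z - y = (1+t) *\<^sub>R (Y u - y)" by (simp add: z_def algebra_simps)
    then have "z \<noteq> y" using ne t(1) by auto
    moreover have "Y u = (1 - t/(1+t)) *\<^sub>R z + (t/(1+t)) *\<^sub>R y"
    proof -
      have t1: "1 + t \<noteq> 0" using t(1) by simp
      have a1: "1 - t/(1+t) = 1/(1+t)" using t1 by (simp add: field_simps)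
      have h: "(1/(1+t)) *\<^sub>R z = Y u - (t/(1+t)) *\<^sub>R y"
        using t1 by (simp add: z_def scaleR_add_right scaleR_diff_right)
      show ?thesis by (simp add: a1 h)
    qed
    ultimately show ?thesis unfolding in_segment
      using t(1) by (intro conjI exI[where x="t/(1+t)"]) (auto simp: divide_simps)
  qed
  then show False using uext zQ y unfolding extreme_point_of_def by blast
qed

lemma eY_nn: "i\<in>I \<Longrightarrow> 0 \<le> e \<bullet> Y i"
  by (rule QY_e) (simp add: hull_inc)
lemma eX_nn: "i\<in>I \<Longrightarrow> 0 \<le> e \<bullet> X i"
  unfolding e_def by (rule ev_nonneg) (use nnX TC in auto)
lemma eXY0: assumes i: "i\<in>I" shows "e \<bullet> X i = 0 \<longleftrightarrow> e \<bullet> Y i = 0"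
proof -
  have "e \<bullet> X i = 0 \<longleftrightarrow> (\<forall>j\<in>T. X i $ j = 0)" unfolding e_def
    by (rule ev_zero_iff) (use nnX[OF i] TC in auto)
  moreover have "e \<bullet> Y i = 0 \<longleftrightarrow> (\<forall>j\<in>T. Y i $ j = 0)" unfolding e_def
    by (rule ev_zero_iff) (use nnY[OF i] TC in auto)
  moreover have "(\<forall>j\<in>T. X i $ j = 0) \<longleftrightarrow> (\<forall>j\<in>T. Y i $ j = 0)" using patt[OF i] TC by auto
  ultimately show ?thesis by simp
qed

lemma Iu: "i \<in> I - I' \<Longrightarrow> Y i = Y u"
  by (rule Y2) (use ev_zero_iff[of T "Y i"] nnY TC in \<open>auto simp: I'_def e_def hull_inc\<close>)

lemma I'I: "I' \<subseteq> I" by (auto simp: I'_def)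
lemma posY: "i\<in>I' \<Longrightarrow> 0 < e \<bullet> Y i" using eY_nn by (force simp: I'_def)
lemma posX: "i\<in>I' \<Longrightarrow> 0 < e \<bullet> X i" using eX_nn eXY0 by (force simp: I'_def)

lemma YI: "Y`I = insert (Y u) (Y`I')"
  using Iu uI I'I by blast

lemma I'ne: "I' \<noteq> {}"
proof
  assume "I' = {}"
  then have "Y`I = {Y u}" using YI by simp
  then show False using dpos by simp
qed

lemma qY_e: "i\<in>I' \<Longrightarrow> e \<bullet> qY i = 1"
  using posY[of i] eYu by (simp add: qY_def qf_def inner_diff_right inner_add_right)
lemma qX_e: "i\<in>I' \<Longrightarrow> e \<bullet> qX i = 1"
  using posX[of i] eXu by (simp add: qX_def qf_def inner_diff_right inner_add_right)
lemma qY_T: "i\<in>I' \<Longrightarrow> j\<in>T \<Longrightarrow> qY i $ j = Y i $ j / (e \<bullet> Y i)"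
  using YuT by (simp add: qY_def qf_def)
lemma qX_T: "i\<in>I' \<Longrightarrow> j\<in>T \<Longrightarrow> qX i $ j = X i $ j / (e \<bullet> X i)"
  using XuT by (simp add: qX_def qf_def)

lemma qY_nn: "i\<in>I' \<Longrightarrow> j\<in>T \<Longrightarrow> 0 \<le> qY i $ j"
  unfolding qY_T by (rule divide_nonneg_pos) (use nnY I'I TC posY in auto)
lemma qX_nn: "i\<in>I' \<Longrightarrow> j\<in>T \<Longrightarrow> 0 \<le> qX i $ j"
  unfolding qX_T by (rule divide_nonneg_pos) (use nnX I'I TC posX in auto)

lemma qY_aff: "i\<in>I' \<Longrightarrow> qY i \<in> affine hull (Y`I)"
  unfolding qY_def qf_def
  using mem_affine[OF affine_affine_hull, of "Y u" "Y`I" "Y i" "1 - 1 / (e \<bullet> Y i)" "1 / (e \<bullet> Y i)"] uI I'I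
  by (auto simp: hull_inc algebra_simps)
lemma qX_aff: "i\<in>I' \<Longrightarrow> qX i \<in> affine hull (X`I)"
  unfolding qX_def qf_def
  using mem_affine[OF affine_affine_hull, of "X u" "X`I" "X i" "1 - 1 / (e \<bullet> X i)" "1 / (e \<bullet> X i)"] uI I'I
  by (auto simp: hull_inc algebra_simps)

lemma Y_from_q: "i\<in>I' \<Longrightarrow> Y i = (1 - e \<bullet> Y i) *\<^sub>R Y u + (e \<bullet> Y i) *\<^sub>R qY i"
  using posY[of i] by (simp add: qY_def qf_def algebra_simps)
lemma X_from_q: "i\<in>I' \<Longrightarrow> X i = (1 - e \<bullet> X i) *\<^sub>R X u + (e \<bullet> X i) *\<^sub>R qX i"
  using posX[of i] by (simp add: qX_def qf_def algebra_simps)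

lemma affY: "affine hull (Y`I) = affine hull (insert (Y u) (qY`I'))"
proof (rule hull_eqI)
  show "Y`I \<subseteq> affine hull (insert (Y u) (qY`I'))"
  proof
    fix y assume "y \<in> Y`I"
    then have "y = Y u \<or> (\<exists>i\<in>I'. y = Y i)" using YI by auto
    then show "y \<in> affine hull (insert (Y u) (qY`I'))"
    proof
      assume "\<exists>i\<in>I'. y = Y i"
      then obtain i where i: "i\<in>I'" "y = Y i" by auto
      show ?thesis unfolding i(2)
        by (subst Y_from_q[OF i(1)], rule mem_affine[OF affine_affine_hull]) (use i(1) in \<open>auto simp: hull_inc\<close>)
    qed (simp add: hull_inc)
  qed
  show "insert (Y u) (qY`I') \<subseteq> affine hull (Y`I)"
    using qY_aff uI by (auto simp: hull_inc)
qed (auto intro: affine_affine_hull)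

lemma Yu_notin: "Y u \<notin> affine hull (qY`I')"
  using aff_in_hyp[of I' e qY 1 "Y u"] qY_e eYu by auto
lemma Xu_notin: "X u \<notin> affine hull (qX`I')"
  using aff_in_hyp[of I' e qX 1 "X u"] qX_e eXu by auto

lemma dimqY: "aff_dim (qY`I') = aff_dim (Y`I) - 1"
  using aff_dim_insert[of "Y u" "qY`I'"] Yu_notin
  by (metis aff_dim_affine_hull affY add_diff_cancel_right')

lemma dimqX: "aff_dim (qX`I') + 1 \<le> aff_dim (X`I)"
proof -
  have "affine hull (insert (X u) (qX`I')) \<subseteq> affine hull (X`I)"
    by (rule hull_minimal) (use qX_aff uI in \<open>auto simp: hull_inc affine_affine_hull\<close>)
  then have "aff_dim (insert (X u) (qX`I')) \<le> aff_dim (X`I)"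
    by (metis aff_dim_affine_hull aff_dim_subset)
  then show ?thesis using aff_dim_insert[of "X u" "qX`I'"] Xu_notin by simp
qed

lemma Y3: "convex hull (qY`I') = {y \<in> affine hull (qY`I'). \<forall>j\<in>T. 0 \<le> y $ j}"
proof (intro equalityI subsetI)
  fix y assume y: "y \<in> convex hull (qY`I')"
  have "convex hull (qY`I') \<subseteq> {y. \<forall>j\<in>T. 0 \<le> y $ j}"
    by (rule hull_minimal) (use qY_nn in \<open>auto simp: convex_nonneg\<close>)
  then show "y \<in> {y \<in> affine hull (qY`I'). \<forall>j\<in>T. 0 \<le> y $ j}"
    using y convex_hull_subset_affine_hull by blast
next
  fix x assume "x \<in> {y \<in> affine hull (qY`I'). \<forall>j\<in>T. 0 \<le> y $ j}"
  then have xh: "x \<in> affine hull (qY`I')" and xT: "\<forall>j\<in>T. 0 \<le> x $ j" by auto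
  obtain t where t: "t > 0" "t \<le> 1" "\<forall>j\<in>C - T. 0 \<le> Y u $ j + t * (x - Y u) $ j"
    using small_pos[of "C - T" "Y u" "x - Y u"] Yupos by blast
  define z where "z = (1 - t) *\<^sub>R Y u + t *\<^sub>R x"
  have ex: "e \<bullet> x = 1" using aff_in_hyp[of I' e qY 1 x] qY_e xh by auto
  have "affine hull (qY`I') \<subseteq> affine hull (Y`I)"
    by (rule hull_minimal) (use qY_aff in \<open>auto simp: affine_affine_hull\<close>)
  then have xh2: "x \<in> affine hull (Y`I)" using xh by auto
  have "z \<in> affine hull (Y`I)" unfolding z_def
    by (rule mem_affine[OF affine_affine_hull]) (use uI xh2 in \<open>auto simp: hull_inc\<close>)
  moreover have "0 \<le> z $ j" if "j \<in> C" for j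
  proof (cases "j \<in> T")
    case True then show ?thesis using YuT xT t(1) by (simp add: z_def)
  next
    case False then show ?thesis using t(3) that by (simp add: z_def algebra_simps)
  qed
  ultimately have zQ: "z \<in> convex hull (insert (Y u) (Y`I'))" using QY YI by auto
  have ez: "e \<bullet> z = t" using ex eYu by (simp add: z_def inner_add_right)
  have "Y u + (1/t) *\<^sub>R (z - Y u) \<in> convex hull ((\<lambda>i. Y u + (1 / (e \<bullet> Y i)) *\<^sub>R (Y i - Y u))`I')"
    by (rule H3[OF _ eYu _ zQ ez t(1)]) (use posY in auto)
  moreover have "Y u + (1/t) *\<^sub>R (z - Y u) = x"
    using t(1) by (simp add: z_def algebra_simps)
  moreover have "(\<lambda>i. Y u + (1 / (e \<bullet> Y i)) *\<^sub>R (Y i - Y u)) = qY"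
    by (auto simp: qY_def qf_def)
  ultimately show "x \<in> convex hull (qY`I')" by metis
qed

lemma hyp': "hypC I' T qX qY"
  unfolding hypC_def
proof (intro conjI ballI)
  show "I' \<noteq> {}" by (rule I'ne)
  fix i j assume i: "i \<in> I'" and j: "j \<in> T"
  show "0 \<le> qX i $ j" by (rule qX_nn[OF i j])
  show "0 \<le> qY i $ j" by (rule qY_nn[OF i j])
  show "qX i $ j = 0 \<longleftrightarrow> qY i $ j = 0"
    using qX_T[OF i j] qY_T[OF i j] patt I'I i j TC posX[OF i] posY[OF i] by auto
next
  show "aff_dim (qX`I') \<le> aff_dim (qY`I')" using dimqX dimqY dimXY by simp
  show "convex hull (qY`I') = {y \<in> affine hull (qY`I'). \<forall>j\<in>T. 0 \<le> y $ j}" by (rule Y3)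
qed

end

context stepctx begin
lemma piY: "(\<lambda>i. Y u + (1 / (e \<bullet> Y i)) *\<^sub>R (Y i - Y u)) = qY"
  by (auto simp: qY_def qf_def)

lemma keypi:
  assumes "y \<in> convex hull (Y`I)" "0 < e \<bullet> y"
  shows "Y u + (1/(e \<bullet> y)) *\<^sub>R (y - Y u) \<in> convex hull (qY`I')"
proof -
  have yi: "y \<in> convex hull (insert (Y u) (Y`I'))" using assms(1) YI by simp
  have "Y u + (1/(e \<bullet> y)) *\<^sub>R (y - Y u) \<in> convex hull ((\<lambda>i. Y u + (1 / (e \<bullet> Y i)) *\<^sub>R (Y i - Y u))`I')"
    by (rule H3[OF _ eYu _ yi refl assms(2)]) (use posY in auto)
  then show ?thesis unfolding piY .
qed
end

locale stepctx2 = stepctx +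
  assumes IHc: "conclC I' T qX qY"
begin

lemma a': "convex hull (qX`I') = {x \<in> affine hull (qX`I'). \<forall>j\<in>T. 0 \<le> x $ j}"
  using IHc by (simp add: conclC_def)
lemma d': "aff_dim (qX`I') = aff_dim (qY`I')"
  using IHc by (simp add: conclC_def)
lemma b': "convex hull (qX`I') = convex hull (qX`Vx I' qY)"
  using IHc unfolding conclC_def by blast
lemma c': "v\<in>Vx I' qY \<Longrightarrow> x\<in>affine hull (qX`I') \<Longrightarrow> (\<forall>j\<in>T. qY v $ j = 0 \<longrightarrow> x $ j = 0) \<Longrightarrow> x = qX v"
  using IHc by (simp add: conclC_def)

lemma affX_sub: "affine hull (insert (X u) (qX`I')) \<subseteq> affine hull (X`I)"
  by (rule hull_minimal) (use qX_aff uI in \<open>auto simp: hull_inc affine_affine_hull\<close>)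

lemma affX: "affine hull (X`I) = affine hull (insert (X u) (qX`I'))"
  and dimX: "aff_dim (X`I) = aff_dim (Y`I)"
proof -
  have dins: "aff_dim (insert (X u) (qX`I')) = aff_dim (Y`I)"
    using aff_dim_insert[of "X u" "qX`I'"] Xu_notin d' dimqY by simp
  have le: "aff_dim (insert (X u) (qX`I')) \<le> aff_dim (X`I)"
    by (metis affX_sub aff_dim_affine_hull aff_dim_subset)
  then show dX: "aff_dim (X`I) = aff_dim (Y`I)" using dins dimXY by simp
  have "aff_dim (affine hull (insert (X u) (qX`I'))) = aff_dim (affine hull (X`I))"
    using dins dX by simp
  then have "affine hull (affine hull (insert (X u) (qX`I'))) = affine hull (affine hull (X`I))"
    using aff_dim_eq_full_gen[OF affX_sub] by blast
  then show "affine hull (X`I) = affine hull (insert (X u) (qX`I'))" by simp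
qed

lemma cX:
  assumes x: "x \<in> affine hull (X`I)" and xz: "\<forall>j\<in>C. Y u $ j = 0 \<longrightarrow> x $ j = 0"
  shows "x = X u"
proof -
  have xT: "\<forall>j\<in>T. x $ j = 0" using xz by (auto simp: T_def)
  have ex: "e \<bullet> x = 0" using xT by (simp add: e_def ev_inner)
  obtain i0 where i0: "i0 \<in> I'" using I'ne by blast
  have "qX i0 + s *\<^sub>R (x - X u) \<in> convex hull (qX`I')" for s
  proof -
    define xs where "xs = (1 - s) *\<^sub>R X u + s *\<^sub>R x"
    have "xs \<in> affine hull (insert (X u) (qX`I'))" unfolding xs_def
      by (rule mem_affine[OF affine_affine_hull]) (use x affX in \<open>auto simp: hull_inc\<close>)
    moreover have "e \<bullet> xs = 0" using ex eXu by (simp add: xs_def inner_add_right)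
    ultimately have "qX i0 + (xs - X u) \<in> affine hull (qX`I')"
      by (intro H1[OF _ eXu]) (use qX_e i0 in \<open>auto simp: hull_inc\<close>)
    moreover have "xs - X u = s *\<^sub>R (x - X u)" by (simp add: xs_def algebra_simps)
    moreover have "\<forall>j\<in>T. 0 \<le> (qX i0 + s *\<^sub>R (x - X u)) $ j"
      using qX_nn[OF i0] xT XuT by simp
    ultimately show ?thesis using a' by simp
  qed
  then have "x - X u = 0" using H4[of "qX`I'" "qX i0" "x - X u"] by simp
  then show ?thesis by simp
qed

end

context stepctx2 begin

lemma Y4:
  assumes v: "v \<in> Vx I' qY"
  shows "\<exists>u'\<in>I'. u' \<in> Vx I Y \<and> qY u' = qY v"
proof -
  define QF where "QF = convex hull (qY`I')"
  define QYs where "QYs = convex hull (Y`I)"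
  have vI': "v \<in> I'" and qext: "qY v extreme_point_of QF" using v by (auto simp: Vx_def QF_def)
  have "{qY v} face_of QF" using qext by (simp add: face_of_singleton)
  moreover have "polyhedron QF" unfolding QF_def by (simp add: polytope_imp_polyhedron polytope_convex_hull)
  ultimately have "{qY v} exposed_face_of QF" by (simp add: exposed_face_of_polyhedron)
  then obtain h b where hb: "QF \<subseteq> {x. h \<bullet> x \<le> b}" "{qY v} = QF \<inter> {x. h \<bullet> x = b}"
    unfolding exposed_face_of_def by blast
  define G where "G = h - (b - h \<bullet> Y u) *\<^sub>R e"
  define c0 where "c0 = h \<bullet> Y u"
  define pi where "pi y = Y u + (1/(e \<bullet> y)) *\<^sub>R (y - Y u)" for y
  have Gcalc: "G \<bullet> y - c0 = (e \<bullet> y) * (h \<bullet> pi y - b)" if "e \<bullet> y \<noteq> 0" for y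
    using that by (simp add: G_def c0_def pi_def inner_diff_left inner_add_right inner_diff_right algebra_simps)
  have piQ: "pi y \<in> QF" if "y \<in> QYs" "0 < e \<bullet> y" for y
    using keypi[OF _ that(2)] that(1) by (simp add: pi_def QF_def QYs_def)
  have y0: "y = Y u" if "y \<in> QYs" "e \<bullet> y = 0" for y
  proof (rule Y2)
    show "y \<in> convex hull (Y`I)" using that(1) by (simp add: QYs_def)
    show "\<forall>j\<in>T. y $ j = 0"
      using ev_zero_iff[of T y] that QY_nn[of y] TC by (auto simp: e_def QYs_def)
  qed
  have Gle: "G \<bullet> y \<le> c0" if "y \<in> QYs" for y
  proof (cases "e \<bullet> y = 0")
    case True
    then show ?thesis using y0[OF that True] eYu by (simp add: G_def c0_def inner_diff_left)
  next
    case False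
    then have ep: "0 < e \<bullet> y" using QY_e[of y] that by (simp add: QYs_def)
    have "h \<bullet> pi y \<le> b" using hb(1) piQ[OF that ep] by auto
    then have "(e \<bullet> y) * (h \<bullet> pi y - b) \<le> 0" using ep by (simp add: mult_nonneg_nonpos)
    then show ?thesis using Gcalc[OF False] by simp
  qed
  have Geq: "pi y = qY v" if "y \<in> QYs" "0 < e \<bullet> y" "G \<bullet> y = c0" for y
  proof -
    have "(e \<bullet> y) * (h \<bullet> pi y - b) = 0" using Gcalc[of y] that by simp
    then have "h \<bullet> pi y = b" using that(2) by simp
    then have "pi y \<in> {qY v}" using hb(2) piQ[OF that(1,2)] by blast
    then show ?thesis by simp
  qed
  have yrec: "y = Y u + (e \<bullet> y) *\<^sub>R (pi y - Y u)" if "0 < e \<bullet> y" for y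
    using that by (simp add: pi_def)
  define R where "R = QYs \<inter> {y. G \<bullet> y = c0}"
  have cvx: "convex QYs" by (simp add: QYs_def)
  have RF: "R face_of QYs" unfolding R_def
    by (rule face_of_Int_supporting_hyperplane_le[OF cvx Gle])
  have Rc: "compact R" unfolding R_def QYs_def
    by (intro compact_Int_closed compact_convex_hull finite_imp_compact closed_hyperplane) simp
  have vI: "v \<in> I" using vI' I'I by auto
  have evp: "0 < e \<bullet> Y v" using posY[OF vI'] .
  have "pi (Y v) = qY v" by (simp add: pi_def qY_def qf_def)
  moreover have "qY v \<in> QF" unfolding QF_def using vI' by (simp add: hull_inc)
  ultimately have "h \<bullet> pi (Y v) = b" using hb(2) by blast
  then have YvR: "Y v \<in> R"
    using Gcalc[of "Y v"] evp vI by (simp add: R_def QYs_def hull_inc)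
  obtain z where z: "z \<in> R" "\<forall>y\<in>R. e \<bullet> y \<le> e \<bullet> z"
    using continuous_attains_sup[OF Rc _ continuous_on_inner[OF continuous_on_const continuous_on_id], of e] YvR
    by blast
  have ez: "0 < e \<bullet> z" using z(2) YvR evp by force
  define R2 where "R2 = R \<inter> {y. e \<bullet> y = e \<bullet> z}"
  have "R2 face_of R" unfolding R2_def
    by (rule face_of_Int_supporting_hyperplane_le[OF face_of_imp_convex[OF RF]]) (use z in auto)
  then have R2F: "R2 face_of QYs" using RF face_of_trans by blast
  have "R2 = {z}"
  proof
    show "{z} \<subseteq> R2" using z by (auto simp: R2_def)
    show "R2 \<subseteq> {z}"
    proof
      fix y assume y: "y \<in> R2"
      have yQ: "y \<in> QYs" "G \<bullet> y = c0" "e \<bullet> y = e \<bullet> z" using y by (auto simp: R2_def R_def)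
      have zQ: "z \<in> QYs" "G \<bullet> z = c0" using z(1) by (auto simp: R_def)
      have "y = Y u + (e \<bullet> z) *\<^sub>R (qY v - Y u)"
        using yrec[of y] Geq[OF yQ(1) _ yQ(2)] yQ(3) ez by simp
      moreover have "z = Y u + (e \<bullet> z) *\<^sub>R (qY v - Y u)"
        using yrec[of z] Geq[OF zQ(1) ez zQ(2)] ez by simp
      ultimately show "y \<in> {z}" by simp
    qed
  qed
  then have "z extreme_point_of QYs" using R2F by (simp add: face_of_singleton)
  then have "z \<in> Y`I" unfolding QYs_def by (rule extreme_point_of_convex_hull)
  then obtain u' where u': "u' \<in> I" "z = Y u'" by auto
  have u'I': "u' \<in> I'" using u' ez by (auto simp: I'_def)
  have "u' \<in> Vx I Y" using u' \<open>z extreme_point_of QYs\<close> by (simp add: Vx_def QYs_def)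
  moreover have "qY u' = qY v"
  proof -
    have "pi z = qY v" using Geq[of z] z(1) ez by (simp add: R_def)
    then show ?thesis using u' by (simp add: pi_def qY_def qf_def)
  qed
  ultimately show ?thesis using u'I' by blast
qed

lemma Y4X:
  assumes v: "v \<in> Vx I' qY"
  shows "\<exists>u'\<in>Vx I Y. u' \<in> I' \<and> qX u' = qX v"
proof -
  obtain u' where u': "u' \<in> I'" "u' \<in> Vx I Y" "qY u' = qY v" using Y4[OF v] by blast
  have "qX u' = qX v"
  proof (rule c'[OF v])
    show "qX u' \<in> affine hull (qX`I')" using u'(1) by (simp add: hull_inc)
    show "\<forall>j\<in>T. qY v $ j = 0 \<longrightarrow> qX u' $ j = 0"
    proof (intro ballI impI)
      fix j assume j: "j \<in> T" "qY v $ j = 0"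
      then have "Y u' $ j / (e \<bullet> Y u') = 0" using qY_T[OF u'(1) j(1)] u'(3) by simp
      then have "Y u' $ j = 0" using posY[OF u'(1)] by simp
      then have "X u' $ j = 0" using patt[of u' j] u'(1) I'I TC j(1) by auto
      then show "qX u' $ j = 0" using qX_T[OF u'(1) j(1)] by simp
    qed
  qed
  then show ?thesis using u' by blast
qed

lemma cone:
  assumes g: "\<forall>u'\<in>Vx I Y. g \<bullet> X u \<le> g \<bullet> X u'"
    and y: "y \<in> affine hull (X`I)" and ynn: "\<forall>j\<in>C. 0 \<le> y $ j"
  shows "g \<bullet> X u \<le> g \<bullet> y"
proof -
  have t0: "0 \<le> e \<bullet> y" unfolding e_def by (rule ev_nonneg) (use ynn TC in auto)
  show ?thesis
  proof (cases "e \<bullet> y = 0")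
    case True
    then have "\<forall>j\<in>T. y $ j = 0" using ev_zero_iff[of T y] ynn TC by (auto simp: e_def)
    then have "y = X u" by (intro cX[OF y]) (auto simp: T_def)
    then show ?thesis by simp
  next
    case False
    define t where "t = e \<bullet> y"
    have tp: "0 < t" using t0 False by (simp add: t_def)
    define z where "z = X u + (1/t) *\<^sub>R (y - X u)"
    have zh: "z \<in> affine hull (qX`I')" unfolding z_def
      by (rule H2[OF _ eXu _ _ t_def[symmetric]]) (use qX_e y affX tp in auto)
    have "\<forall>j\<in>T. 0 \<le> z $ j" using XuT ynn TC tp by (auto simp: z_def)
    then have "z \<in> convex hull (qX`Vx I' qY)" using zh a' b' by auto
    moreover have "convex hull (qX`Vx I' qY) \<subseteq> {x. g \<bullet> x \<ge> g \<bullet> X u}"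
    proof (rule hull_minimal)
      show "qX`Vx I' qY \<subseteq> {x. g \<bullet> x \<ge> g \<bullet> X u}"
      proof
        fix r assume "r \<in> qX`Vx I' qY"
        then obtain v where v: "v \<in> Vx I' qY" "r = qX v" by auto
        obtain u' where u': "u' \<in> Vx I Y" "u' \<in> I'" "qX u' = qX v" using Y4X[OF v(1)] by blast
        have "g \<bullet> r = g \<bullet> X u + (1 / (e \<bullet> X u')) * (g \<bullet> X u' - g \<bullet> X u)"
        proof -
          have "r = qX u'" using v u' by simp
          then show ?thesis by (simp add: qX_def qf_def inner_add_right inner_diff_right)
        qed
        moreover have "0 \<le> (1 / (e \<bullet> X u')) * (g \<bullet> X u' - g \<bullet> X u)"
          using posX[OF u'(2)] g u'(1) by simp
        ultimately show "r \<in> {x. g \<bullet> x \<ge> g \<bullet> X u}" by simp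
      qed
    qed (simp add: convex_halfspace_ge)
    ultimately have gz: "g \<bullet> X u \<le> g \<bullet> z" by auto
    have "y = X u + t *\<^sub>R (z - X u)" using tp by (simp add: z_def)
    then have "g \<bullet> y = g \<bullet> X u + t * (g \<bullet> z - g \<bullet> X u)"
      by (metis inner_add_right inner_diff_right inner_scaleR_right)
    then show ?thesis using gz tp by simp
  qed
qed

end

lemma P'_conv:
  fixes X :: "'p::finite \<Rightarrow> real^'q::finite"
  assumes "\<forall>i\<in>I. \<forall>j\<in>C. 0 \<le> X i $ j"
  shows "convex hull (X`I) \<subseteq> {x \<in> affine hull (X`I). \<forall>j\<in>C. 0 \<le> x $ j}"
proof -
  have "convex hull (X`I) \<subseteq> affine hull (X`I) \<inter> {x. \<forall>j\<in>C. 0 \<le> x $ j}"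
    by (rule hull_minimal) (use assms in \<open>auto simp: hull_inc convex_nonneg affine_imp_convex intro!: convex_Int\<close>)
  then show ?thesis by auto
qed

lemma core_base:
  assumes h: "hypC I C X Y" and d: "aff_dim (Y`I) = 0"
  shows "conclC I C X Y"
proof -
  have Ine: "I \<noteq> {}" using h by (simp add: hypC_def)
  have "aff_dim (X`I) \<le> 0" using h d by (simp add: hypC_def)
  moreover have "aff_dim (X`I) \<ge> 0" using Ine by (simp add: aff_dim_geq) (metis aff_dim_negative_iff image_is_empty not_le)
  ultimately obtain a where a: "X`I = {a}" using aff_dim_eq_0 by (metis order_antisym)
  obtain b where b: "Y`I = {b}" using d aff_dim_eq_0 by metis
  have V: "Vx I Y = I"
    using b by (auto simp: Vx_def extreme_point_of_def)
  obtain i0 where i0: "i0 \<in> I" using Ine by blast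
  have ai: "a = X i0" using a i0 by auto
  have ann: "\<forall>j\<in>C. 0 \<le> a $ j" using h i0 ai by (simp add: hypC_def)
  show ?thesis unfolding conclC_def V
  proof (intro conjI ballI impI)
    show "convex hull (X`I) = {x \<in> affine hull (X`I). \<forall>j\<in>C. 0 \<le> x $ j}"
      using a ann by auto
    show "aff_dim (X`I) = aff_dim (Y`I)" using a b by simp
    show "convex hull (X`I) = convex hull (X`I)" by simp
    fix u x assume "u \<in> I" "x \<in> affine hull (X`I)"
    then show "x = X u" using a by auto
  qed
qed

lemma core_step:
  fixes I :: "'p::finite set" and C :: "'q::finite set" and X Y :: "'p \<Rightarrow> real^'q"
  assumes h: "hypC I C X Y" and d: "aff_dim (Y`I) = int (Suc n)"
    and IH: "\<And>I' C' X' Y'. hypC I' C' (X' :: 'p \<Rightarrow> real^'q) Y' \<Longrightarrow> aff_dim (Y'`I') = int n \<Longrightarrow> conclC I' C' X' Y'"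
  shows "conclC I C X Y"
proof -
  have S: "stepctx2 I C X Y u" if uV: "u \<in> Vx I Y" for u
  proof -
    have st: "stepctx I C X Y u" by unfold_locales (use h uV d in auto)
    interpret stepctx I C X Y u by (rule st)
    have c: "conclC I' T qX qY" by (rule IH[OF hyp']) (use dimqY d in simp)
    show ?thesis by (rule stepctx2.intro[OF st]) (unfold_locales, rule c)
  qed
  have Ine: "I \<noteq> {}" using h by (simp add: hypC_def)
  have nnX: "\<forall>i\<in>I. \<forall>j\<in>C. 0 \<le> X i $ j" using h by (simp add: hypC_def)
  define V where "V = Vx I Y"
  have VI: "V \<subseteq> I" by (auto simp: V_def Vx_def)
  have Vne: "V \<noteq> {}"
  proof -
    have cc: "compact (convex hull (Y`I))" "convex (convex hull (Y`I))"
      by (simp_all add: compact_convex_hull finite_imp_compact)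
    have "convex hull (Y`I) \<noteq> {}" using Ine by simp
    then have "{x. x extreme_point_of convex hull (Y`I)} \<noteq> {}"
      using Krein_Milman_Minkowski[OF cc] by auto
    then obtain z where z: "z extreme_point_of convex hull (Y`I)" by auto
    then have "z \<in> Y`I" by (rule extreme_point_of_convex_hull)
    then obtain i where "i \<in> I" "z = Y i" by auto
    then have "i \<in> V" using z by (simp add: V_def Vx_def)
    then show ?thesis by auto
  qed
  then obtain u0 where u0: "u0 \<in> V" by auto
  have sub: "{x \<in> affine hull (X`I). \<forall>j\<in>C. 0 \<le> x $ j} \<subseteq> convex hull (X`V)"
  proof
    fix y assume "y \<in> {x \<in> affine hull (X`I). \<forall>j\<in>C. 0 \<le> x $ j}"
    then have y: "y \<in> affine hull (X`I)" "\<forall>j\<in>C. 0 \<le> y $ j" by auto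
    show "y \<in> convex hull (X`V)"
    proof (rule ccontr)
      assume ny: "y \<notin> convex hull (X`V)"
      have "closed (convex hull (X`V))" by (simp add: compact_imp_closed compact_convex_hull finite_imp_compact)
      then obtain a b where ab: "a \<bullet> y < b" "\<forall>x\<in>convex hull (X`V). b < a \<bullet> x"
        using separating_hyperplane_closed_point[OF convex_convex_hull _ ny] by blast
      define m where "m = Min ((\<lambda>u. a \<bullet> X u)`V)"
      have "m \<in> (\<lambda>u. a \<bullet> X u)`V" unfolding m_def using Vne by simp
      then obtain u where u: "u \<in> V" "m = a \<bullet> X u" by auto
      have "\<forall>u'\<in>Vx I Y. a \<bullet> X u \<le> a \<bullet> X u'"
      proof
        fix u' assume "u' \<in> Vx I Y"
        then have "m \<le> a \<bullet> X u'" unfolding m_def V_def by (intro Min_le) auto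
        then show "a \<bullet> X u \<le> a \<bullet> X u'" using u(2) by simp
      qed
      then have "a \<bullet> X u \<le> a \<bullet> y"
        using stepctx2.cone[OF S[of u]] u y by (simp add: V_def)
      moreover have "b < a \<bullet> X u" using ab(2) u(1) by (simp add: hull_inc)
      ultimately show False using ab(1) by simp
    qed
  qed
  have eq1: "convex hull (X`I) = {x \<in> affine hull (X`I). \<forall>j\<in>C. 0 \<le> x $ j}"
    using sub P'_conv[OF nnX] hull_mono[of "X`V" "X`I" convex] VI by blast
  have eq2: "convex hull (X`I) = convex hull (X`V)"
    using sub P'_conv[OF nnX] hull_mono[of "X`V" "X`I" convex] VI by blast
  show ?thesis unfolding conclC_def
  proof (intro conjI)
    show "convex hull (X`I) = {x \<in> affine hull (X`I). \<forall>j\<in>C. 0 \<le> x $ j}" by (rule eq1)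
    show "aff_dim (X`I) = aff_dim (Y`I)" using stepctx2.dimX[OF S] u0 by (simp add: V_def)
    show "convex hull (X`I) = convex hull (X`Vx I Y)" using eq2 by (simp add: V_def)
    show "\<forall>u\<in>Vx I Y. \<forall>x\<in>affine hull (X`I). (\<forall>j\<in>C. Y u $ j = 0 \<longrightarrow> x $ j = 0) \<longrightarrow> x = X u"
      using stepctx2.cX[OF S] by blast
  qed
qed

lemma core:
  fixes I :: "'p::finite set" and C :: "'q::finite set" and X Y :: "'p \<Rightarrow> real^'q"
  assumes h: "hypC I C X Y"
  shows "conclC I C X Y"
proof -
  have "I \<noteq> {}" using h by (simp add: hypC_def)
  then have "aff_dim (Y`I) \<ge> 0" by (metis aff_dim_negative_iff image_is_empty not_le)
  then obtain n where n: "aff_dim (Y`I) = int n" by (metis nonneg_int_cases)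
  have "\<And>I C X Y. hypC I C (X :: 'p \<Rightarrow> real^'q) Y \<Longrightarrow> aff_dim (Y`I) = int n \<Longrightarrow> conclC I C X Y"
  proof (induction n)
    case 0 then show ?case using core_base by simp
  next
    case (Suc n) then show ?case using core_step by blast
  qed
  then show ?thesis using h n by blast
qed


locale slk =
  fixes n :: nat and V :: "'p::finite \<Rightarrow> nat \<Rightarrow> real" and W :: "'q::finite \<Rightarrow> nat \<Rightarrow> real"
    and w :: "'q \<Rightarrow> real" and S :: "real^'q^'p"
  assumes eq: "conv_rows n V = ineq_set n W w"
    and Sdef: "\<forall>i j. S $ i $ j = w j - (\<Sum>k<n. W j k * V i k)"
begin

definition "P = conv_rows n V"
definition L :: "(nat \<Rightarrow> real) \<Rightarrow> real^'q" where "L x = (\<chi> j. w j - (\<Sum>k<n. W j k * x k))"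
definition Vt :: "'p \<Rightarrow> nat \<Rightarrow> real" where "Vt i k = (if k < n then V i k else 0)"
definition "rowsS = range (\<lambda>i. S $ i)"

lemma P_iff: "x \<in> P \<longleftrightarrow> x \<in> Rn n \<and> (\<exists>l :: 'p \<Rightarrow> real. (\<forall>i. l i \<ge> 0) \<and> (\<Sum>i\<in>UNIV. l i) = 1 \<and>
       (\<forall>k<n. x k = (\<Sum>i\<in>UNIV. l i * V i k)))"
  by (simp add: P_def conv_rows_def)

lemma P_ineq: "x \<in> P \<longleftrightarrow> x \<in> Rn n \<and> (\<forall>j. (\<Sum>k<n. W j k * x k) \<le> w j)"
  using eq by (simp add: P_def ineq_set_def)

lemma Vt_Rn: "Vt i \<in> Rn n" by (simp add: Rn_def Vt_def)

lemma Vt_P: "Vt i \<in> P"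
  unfolding P_iff
proof (intro conjI Vt_Rn exI[where x="\<lambda>i'. if i' = i then 1 else 0"] allI impI)
  fix k assume "k < n"
  then show "Vt i k = (\<Sum>i'\<in>UNIV. (if i' = i then 1 else 0) * V i' k)"
  proof -
    have "(\<Sum>i'\<in>UNIV. (if i' = i then 1 else 0) * V i' k) = (\<Sum>i'\<in>UNIV. if i' = i then V i' k else 0)"
      by (rule sum.cong) auto
    then show ?thesis using \<open>k < n\<close> by (simp add: Vt_def)
  qed
qed auto

lemma S_L: "S $ i = L (Vt i)"
  by (simp add: vec_eq_iff L_def Sdef Vt_def)

lemma L_comb:
  assumes "\<forall>k<n. x k = (\<Sum>i\<in>UNIV. l i * y i k)" "(\<Sum>i\<in>UNIV. l i) = 1"
  shows "L x = (\<Sum>i\<in>UNIV. l i *\<^sub>R L (y i))"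
proof -
  have "L x $ j = (\<Sum>i\<in>UNIV. l i *\<^sub>R L (y i)) $ j" for j
  proof -
    have "(\<Sum>k<n. W j k * x k) = (\<Sum>k<n. \<Sum>i\<in>UNIV. l i * (W j k * y i k))"
      using assms(1) by (simp add: sum_distrib_left mult.left_commute)
    also have "\<dots> = (\<Sum>i\<in>UNIV. l i * (\<Sum>k<n. W j k * y i k))"
      by (subst sum.swap) (simp add: sum_distrib_left)
    finally have e: "(\<Sum>k<n. W j k * x k) = (\<Sum>i\<in>UNIV. l i * (\<Sum>k<n. W j k * y i k))" .
    have "(\<Sum>i\<in>UNIV. l i *\<^sub>R L (y i)) $ j = (\<Sum>i\<in>UNIV. l i * (w j - (\<Sum>k<n. W j k * y i k)))"
      by (simp add: L_def)
    also have "\<dots> = (\<Sum>i\<in>UNIV. l i) * w j - (\<Sum>i\<in>UNIV. l i * (\<Sum>k<n. W j k * y i k))"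
      by (simp add: right_diff_distrib sum_subtractf sum_distrib_right)
    finally show ?thesis using e assms(2) by (simp add: L_def)
  qed
  then show ?thesis by (simp add: vec_eq_iff)
qed

lemma L_P_conv: "x \<in> P \<Longrightarrow> L x \<in> convex hull rowsS"
proof -
  assume "x \<in> P"
  then obtain l :: "'p \<Rightarrow> real" where l: "\<forall>i. l i \<ge> 0" "(\<Sum>i\<in>UNIV. l i) = 1" "\<forall>k<n. x k = (\<Sum>i\<in>UNIV. l i * V i k)"
    unfolding P_iff by blast
  have "\<forall>k<n. x k = (\<Sum>i\<in>UNIV. l i * Vt i k)" using l(3) by (simp add: Vt_def)
  then have "L x = (\<Sum>i\<in>UNIV. l i *\<^sub>R S $ i)" using L_comb[OF _ l(2)] by (simp add: S_L)
  then show ?thesis unfolding rowsS_def conv_idx[OF finite_class.finite_UNIV] using l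
    by (intro CollectI exI[where x=l] conjI) auto
qed

lemma P_bound:
  assumes "x \<in> P" "k < n"
  shows "\<bar>x k\<bar> \<le> (\<Sum>i\<in>UNIV. \<bar>V i k\<bar>)"
proof -
  obtain l :: "'p \<Rightarrow> real" where l: "\<forall>i. l i \<ge> 0" "(\<Sum>i\<in>UNIV. l i) = 1" "\<forall>k<n. x k = (\<Sum>i\<in>UNIV. l i * V i k)"
    using assms(1) unfolding P_iff by blast
  have l1: "l i \<le> 1" for i
  proof -
    have "l i \<le> (\<Sum>i\<in>UNIV. l i)" by (rule member_le_sum) (use l(1) in auto)
    then show ?thesis using l(2) by simp
  qed
  have "\<bar>x k\<bar> \<le> (\<Sum>i\<in>UNIV. \<bar>l i * V i k\<bar>)" using l(3) assms(2) by (simp add: sum_abs)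
  also have "\<dots> \<le> (\<Sum>i\<in>UNIV. \<bar>V i k\<bar>)"
    by (rule sum_mono) (use l(1) l1 in \<open>auto simp: abs_mult intro: mult_left_le_one_le\<close>)
  finally show ?thesis .
qed

lemma BND:
  assumes d: "d \<in> Rn n" and ray: "\<And>t. t \<ge> 0 \<Longrightarrow> (\<lambda>k. x0 k + t * d k) \<in> P"
  shows "d = (\<lambda>k. 0)"
proof
  fix k show "d k = 0"
  proof (cases "k < n")
    case False then show ?thesis using d by (simp add: Rn_def)
  next
    case True
    show ?thesis
    proof (rule ccontr)
      assume dk: "d k \<noteq> 0"
      define B where "B = (\<Sum>i\<in>UNIV. \<bar>V i k\<bar>)"
      define t where "t = (B + \<bar>x0 k\<bar> + 1) / \<bar>d k\<bar>"
      have B0: "0 \<le> B" by (simp add: B_def sum_nonneg)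
      have t0: "t \<ge> 0" using B0 by (simp add: t_def)
      have "\<bar>x0 k + t * d k\<bar> \<le> B" using P_bound[OF ray[OF t0] True] by (simp add: B_def)
      moreover have "\<bar>t * d k\<bar> = B + \<bar>x0 k\<bar> + 1" using dk B0 by (simp add: t_def abs_mult)
      ultimately show False by linarith
    qed
  qed
qed

lemma T1: "0 \<le> S $ i $ j"
proof -
  have "(\<Sum>k<n. W j k * Vt i k) \<le> w j" using Vt_P[of i] unfolding P_ineq by blast
  then show ?thesis using S_L[of i] by (simp add: L_def)
qed

lemma T2: "convex hull rowsS = {y \<in> affine hull rowsS. \<forall>j\<in>UNIV. 0 \<le> y $ j}"
proof (intro equalityI subsetI)
  fix y assume "y \<in> convex hull rowsS"
  then show "y \<in> {y \<in> affine hull rowsS. \<forall>j\<in>UNIV. 0 \<le> y $ j}"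
    using P'_conv[of UNIV UNIV "\<lambda>i. S $ i"] T1 by (auto simp: rowsS_def)
next
  fix y assume "y \<in> {y \<in> affine hull rowsS. \<forall>j\<in>UNIV. 0 \<le> y $ j}"
  then have yh: "y \<in> affine hull rowsS" and ynn: "\<forall>j. 0 \<le> y $ j" by auto
  obtain l where l: "sum l UNIV = 1" "(\<Sum>i\<in>UNIV. l i *\<^sub>R S $ i) = y"
    using yh unfolding rowsS_def aff_idx[OF finite_class.finite_UNIV] by blast
  define x where "x k = (if k < n then (\<Sum>i\<in>UNIV. l i * V i k) else 0)" for k
  have xR: "x \<in> Rn n" by (simp add: Rn_def x_def)
  have xc: "\<forall>k<n. x k = (\<Sum>i\<in>UNIV. l i * Vt i k)" by (simp add: x_def Vt_def)
  have Lx: "L x = y" using L_comb[OF xc l(1)] l(2) by (simp add: S_L)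
  have "\<forall>j. (\<Sum>k<n. W j k * x k) \<le> w j"
  proof
    fix j have "0 \<le> L x $ j" using ynn Lx by simp
    then show "(\<Sum>k<n. W j k * x k) \<le> w j" by (simp add: L_def)
  qed
  then have "x \<in> P" using xR by (simp add: P_ineq)
  then have "L x \<in> convex hull rowsS" by (rule L_P_conv)
  then show "y \<in> convex hull rowsS" using Lx by simp
qed

lemma L_diff: "L x - L y = (\<chi> j. - (\<Sum>k<n. W j k * (x k - y k)))"
  by (simp add: vec_eq_iff L_def sum_subtractf right_diff_distrib)

lemma H0:
  assumes "aff_dim rowsS \<ge> 1"
  shows "0 \<notin> affine hull rowsS"
proof
  assume "0 \<in> affine hull rowsS"
  then obtain l where l: "sum l UNIV = 1" "(\<Sum>i\<in>UNIV. l i *\<^sub>R S $ i) = 0"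
    unfolding rowsS_def aff_idx[OF finite_class.finite_UNIV] by blast
  define x where "x k = (if k < n then (\<Sum>i\<in>UNIV. l i * V i k) else 0)" for k
  have xR: "x \<in> Rn n" by (simp add: Rn_def x_def)
  have xc: "\<forall>k<n. x k = (\<Sum>i\<in>UNIV. l i * Vt i k)" by (simp add: x_def Vt_def)
  have Lx: "L x = 0" using L_comb[OF xc l(1)] l(2) by (simp add: S_L)
  have Wx: "(\<Sum>k<n. W j k * x k) = w j" for j using Lx by (simp add: vec_eq_iff L_def)
  have all: "S $ i = 0" for i
  proof -
    define y where "y = Vt i"
    have yP: "y \<in> P" by (simp add: y_def Vt_P)
    have "(\<lambda>k. y k - x k) = (\<lambda>k. 0)"
    proof (rule BND)
      show "(\<lambda>k. y k - x k) \<in> Rn n" using xR Vt_Rn by (simp add: Rn_def y_def)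
      fix t :: real assume t: "t \<ge> 0"
      have "(\<lambda>k. y k + t * (y k - x k)) \<in> Rn n" using xR Vt_Rn by (simp add: Rn_def y_def)
      moreover have "(\<Sum>k<n. W j k * (y k + t * (y k - x k))) \<le> w j" for j
      proof -
        have yj: "(\<Sum>k<n. W j k * y k) \<le> w j" using yP by (simp add: P_ineq)
        have "(\<Sum>k<n. W j k * (y k + t * (y k - x k))) = (\<Sum>k<n. W j k * y k) + t * ((\<Sum>k<n. W j k * y k) - w j)"
          by (simp add: algebra_simps sum.distrib sum_subtractf sum_distrib_left Wx[symmetric])
        also have "\<dots> \<le> w j" using yj t by (smt (verit) mult_nonneg_nonpos)
        finally show ?thesis .
      qed
      ultimately show "(\<lambda>k. y k + t * (y k - x k)) \<in> P" by (simp add: P_ineq)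
    qed
    then have "\<forall>k. y k = x k" by (metis eq_iff_diff_eq_0)
    then have "Vt i = x" by (simp add: y_def fun_eq_iff)
    then have "S $ i = L x" using S_L[of i] by simp
    then show ?thesis using Lx by simp
  qed
  then have "rowsS = {0}" by (auto simp: rowsS_def)
  then show False using assms by simp
qed

end

lemma FAM:
  fixes v :: "nat \<Rightarrow> 'a::real_vector"
  assumes fin: "finite J" and ind: "\<And>c. (\<Sum>i\<in>J. c i *\<^sub>R v i) = 0 \<Longrightarrow> \<forall>i\<in>J. c i = 0"
  shows "inj_on v J" "independent (v`J)"
proof -
  show inj: "inj_on v J"
  proof (rule inj_onI, rule ccontr)
    fix i j assume ij: "i\<in>J" "j\<in>J" "v i = v j" "i \<noteq> j"
    define c where "c k = (if k = i then 1 else if k = j then -1 else (0::real))" for k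
    have "(\<Sum>k\<in>J. c k *\<^sub>R v k) = (\<Sum>k\<in>{i,j}. c k *\<^sub>R v k)"
      by (rule sum.mono_neutral_right) (use fin ij in \<open>auto simp: c_def\<close>)
    also have "\<dots> = 0" using ij by (simp add: c_def)
    finally have "c i = 0" using ind ij(1) by blast
    then show False by (simp add: c_def)
  qed
  show "independent (v`J)"
  proof
    assume "dependent (v`J)"
    then obtain u where u: "\<exists>x\<in>v`J. u x \<noteq> 0" "(\<Sum>x\<in>v`J. u x *\<^sub>R x) = 0"
      using real_vector.dependent_finite[of "v`J"] fin by auto
    have "(\<Sum>i\<in>J. u (v i) *\<^sub>R v i) = 0" using u(2) sum.reindex[OF inj, of "\<lambda>x. u x *\<^sub>R x"] by (simp add: comp_def)
    then have "\<forall>i\<in>J. u (v i) = 0" by (rule ind)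
    then show False using u(1) by auto
  qed
qed

lemma FAM2:
  fixes B :: "'a::real_vector set"
  assumes fin: "finite B" and ind: "independent B"
  obtains v where "v ` {1..card B} = B" "\<And>c. (\<Sum>i\<in>{1..card B}. c i *\<^sub>R v i) = 0 \<Longrightarrow> \<forall>i\<in>{1..card B}. c i = 0"
proof -
  obtain h where h: "bij_betw h {1..card B} B" using ex_bij_betw_nat_finite_1[OF fin] by blast
  have img: "h`{1..card B} = B" and inj: "inj_on h {1..card B}" using h by (auto simp: bij_betw_def)
  show ?thesis
  proof (rule that[OF img])
    fix c assume c: "(\<Sum>i\<in>{1..card B}. c i *\<^sub>R h i) = 0"
    define u where "u x = c (the_inv_into {1..card B} h x)" for x
    have uh: "u (h i) = c i" if "i \<in> {1..card B}" for i
      using the_inv_into_f_f[OF inj that] by (simp add: u_def)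
    have "(\<Sum>x\<in>B. u x *\<^sub>R x) = (\<Sum>i\<in>{1..card B}. u (h i) *\<^sub>R h i)"
      using sum.reindex[OF inj, of "\<lambda>x. u x *\<^sub>R x"] img by (simp add: comp_def)
    also have "\<dots> = (\<Sum>i\<in>{1..card B}. c i *\<^sub>R h i)" by (rule sum.cong) (auto simp: uh)
    finally have "(\<Sum>x\<in>B. u x *\<^sub>R x) = 0" using c by simp
    then have "\<forall>x\<in>B. u x = 0" using real_vector.dependent_finite[OF fin] ind by blast
    then show "\<forall>i\<in>{1..card B}. c i = 0" using uh img by force
  qed
qed

context slk begin

lemma rowsS_ne: "rowsS \<noteq> {}" by (simp add: rowsS_def)

lemma T3_ge:
  "\<exists>y. (\<forall>i\<le>nat (aff_dim rowsS). y i \<in> P) \<and> aff_indep_pts n (nat (aff_dim rowsS)) y"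
proof -
  define D where "D = nat (aff_dim rowsS)"
  obtain B where B: "B \<subseteq> rowsS" "\<not> affine_dependent B" "int (card B) = aff_dim rowsS + 1"
    using aff_dim_inner_basis_exists[of rowsS] by (metis affine_hull_eq_empty)
  have finB: "finite B" using B(2) by (simp add: aff_independent_finite)
  have "aff_dim rowsS \<ge> 0" using rowsS_ne aff_dim_negative_iff[of rowsS] by linarith
  then have "card B \<noteq> 0" using B(3) by linarith
  then obtain b0 where b0: "b0 \<in> B" using finB by fastforce
  define B' where "B' = (\<lambda>x. -b0 + x) ` (B - {b0})"
  have indB': "independent B'" using B(2) affine_dependent_iff_dependent2[OF b0] by (simp add: B'_def)
  have finB': "finite B'" using finB by (simp add: B'_def)
  have "card B' = card (B - {b0})" unfolding B'_def by (rule card_image) (simp add: inj_on_def)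
  then have cB': "card B' = D" using B(3) b0 finB by (simp add: D_def)
  obtain v where v: "v ` {1..D} = B'" "\<And>c. (\<Sum>i\<in>{1..D}. c i *\<^sub>R v i) = 0 \<Longrightarrow> \<forall>i\<in>{1..D}. c i = 0"
    using FAM2[OF finB' indB'] cB' by metis
  define pt where "pt i = (if i = 0 then b0 else b0 + v i)" for i
  have ptS: "pt i \<in> rowsS" if "i \<le> D" for i
  proof (cases "i = 0")
    case True then show ?thesis using b0 B(1) by (auto simp: pt_def)
  next
    case False
    then have "v i \<in> B'" using v(1) that by auto
    then show ?thesis using B(1) b0 False by (auto simp: pt_def B'_def)
  qed
  define r where "r i = (SOME r. S $ r = pt i)" for i
  have r: "S $ r i = pt i" if "i \<le> D" for i
    using ptS[OF that] unfolding r_def rowsS_def by (metis (mono_tags, lifting) rangeE someI)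
  define y where "y i = Vt (r i)" for i
  have yP: "\<forall>i\<le>D. y i \<in> P" by (simp add: y_def Vt_P)
  have "aff_indep_pts n D y"
    unfolding aff_indep_pts_def
  proof (intro allI impI)
    fix c :: "nat \<Rightarrow> real" assume hc: "\<forall>k<n. (\<Sum>i\<in>{1..D}. c i * (y i k - y 0 k)) = 0"
    have "(\<Sum>i\<in>{1..D}. c i *\<^sub>R v i) = (\<Sum>i\<in>{1..D}. c i *\<^sub>R (L (y i) - L (y 0)))"
    proof (rule sum.cong[OF refl])
      fix i assume i: "i \<in> {1..D}"
      have "L (y i) - L (y 0) = pt i - pt 0" using r i by (simp add: y_def S_L[symmetric])
      then show "c i *\<^sub>R v i = c i *\<^sub>R (L (y i) - L (y 0))" using i by (simp add: pt_def)
    qed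
    also have "\<dots> = 0"
    proof -
      have "(\<Sum>i\<in>{1..D}. c i *\<^sub>R (L (y i) - L (y 0))) $ j = 0" for j
      proof -
        have "(\<Sum>i\<in>{1..D}. c i *\<^sub>R (L (y i) - L (y 0))) $ j
            = - (\<Sum>k<n. W j k * (\<Sum>i\<in>{1..D}. c i * (y i k - y 0 k)))"
          by (simp add: L_diff sum_distrib_left sum_negf[symmetric] mult.left_commute)
             (subst sum.swap, simp)
        also have "\<dots> = 0" using hc by simp
        finally show ?thesis .
      qed
      then show ?thesis by (simp add: vec_eq_iff)
    qed
    finally show "\<forall>i\<in>{1..D}. c i = 0" by (rule v(2))
  qed
  then show ?thesis using yP by (auto simp: D_def)
qed

lemma T3_le:
  assumes yP: "\<forall>i\<le>d. y i \<in> P" and ai: "aff_indep_pts n d y"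
  shows "d \<le> nat (aff_dim rowsS)"
proof -
  define a where "a = L (y 0)"
  define u where "u i = L (y i) - a" for i
  have famind: "\<forall>i\<in>{1..d}. c i = 0" if hc: "(\<Sum>i\<in>{1..d}. c i *\<^sub>R u i) = 0" for c
  proof -
    define dl where "dl k = (if k < n then (\<Sum>i\<in>{1..d}. c i * (y i k - y 0 k)) else 0)" for k
    have Wd: "(\<Sum>k<n. W j k * dl k) = 0" for j
    proof -
      have "(\<Sum>i\<in>{1..d}. c i *\<^sub>R u i) $ j = - (\<Sum>k<n. W j k * dl k)"
        by (simp add: u_def a_def L_diff sum_distrib_left sum_negf[symmetric] mult.left_commute dl_def)
           (subst sum.swap, simp)
      moreover have "(\<Sum>i\<in>{1..d}. c i *\<^sub>R u i) $ j = 0" using hc by simp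
      ultimately show ?thesis by linarith
    qed
    have "dl = (\<lambda>k. 0)"
    proof (rule BND[of dl "y 0"])
      show "dl \<in> Rn n" by (simp add: Rn_def dl_def)
      fix t :: real assume t: "t \<ge> 0"
      have y0: "y 0 \<in> P" using yP by simp
      have "(\<lambda>k. y 0 k + t * dl k) \<in> Rn n" using y0 by (simp add: P_iff Rn_def dl_def)
      moreover have "(\<Sum>k<n. W j k * (y 0 k + t * dl k)) \<le> w j" for j
      proof -
        have "(\<Sum>k<n. W j k * (y 0 k + t * dl k)) = (\<Sum>k<n. W j k * y 0 k) + t * (\<Sum>k<n. W j k * dl k)"
          by (simp add: algebra_simps sum.distrib sum_distrib_left)
        then show ?thesis using Wd y0 by (simp add: P_ineq)
      qed
      ultimately show "(\<lambda>k. y 0 k + t * dl k) \<in> P" by (simp add: P_ineq)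
    qed
    then have "\<forall>k<n. (\<Sum>i\<in>{1..d}. c i * (y i k - y 0 k)) = 0" by (metis dl_def)
    then show ?thesis using ai by (simp add: aff_indep_pts_def)
  qed
  have inj: "inj_on u {1..d}" and ind: "independent (u`{1..d})" using FAM[OF _ famind] by auto
  have ah: "a \<in> affine hull rowsS"
    using L_P_conv[of "y 0"] yP convex_hull_subset_affine_hull by (auto simp: a_def)
  have sub: "u`{1..d} \<subseteq> span ((\<lambda>x. - a + x) ` rowsS)"
  proof
    fix z assume "z \<in> u`{1..d}"
    then obtain i where i: "i \<in> {1..d}" "z = u i" by auto
    have "L (y i) \<in> affine hull rowsS"
      using L_P_conv[of "y i"] yP i convex_hull_subset_affine_hull by auto
    then have "L (y i) \<in> affine hull (insert a rowsS)" using hull_redundant[OF ah] by simp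
    then obtain s where "s \<in> span ((\<lambda>x. - a + x) ` rowsS)" "L (y i) = a + s"
      unfolding affine_hull_insert_span_gen by auto
    then show "z \<in> span ((\<lambda>x. - a + x) ` rowsS)" using i by (simp add: u_def)
  qed
  have "card (u`{1..d}) \<le> dim (span ((\<lambda>x. - a + x) ` rowsS))"
    by (rule independent_card_le_dim[OF sub ind])
  moreover have "card (u`{1..d}) = d" using card_image[OF inj] by simp
  moreover have "aff_dim rowsS = int (dim ((\<lambda>x. - a + x) ` rowsS))"
    using aff_dim_eq_dim[OF ah] by simp
  ultimately show ?thesis by simp
qed

lemma T3: "set_dim n P = nat (aff_dim rowsS)"
  unfolding set_dim_def
  by (rule Greatest_equality) (use T3_ge T3_le in auto)

end

lemma rows_eq: "rows (M::real^'q::finite^'p::finite) = range (\<lambda>i. M $ i)"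
  by (auto simp: rows_def row_def vec_lambda_eta)

lemma rank_aff:
  fixes M :: "real^'q::finite^'p::finite"
  assumes "0 \<notin> affine hull (range (\<lambda>i. M $ i))"
  shows "int (rank M) = aff_dim (range (\<lambda>i. M $ i)) + 1"
proof -
  define R where "R = range (\<lambda>i. M $ i)"
  have "aff_dim (insert 0 R) = aff_dim R + 1" using aff_dim_insert[of 0 R] assms by (simp add: R_def)
  moreover have "aff_dim (insert 0 R) = int (dim (insert 0 R))" by (rule aff_dim_zero) (simp add: hull_inc)
  moreover have "dim (insert 0 R) = dim R" by (metis dim_span span_insert_0)
  moreover have "rank M = dim R" by (simp add: row_rank_def rows_eq R_def)
  ultimately show ?thesis by (simp add: R_def)
qed

lemma ones_span_imp:
  fixes M :: "real^'q::finite^'p::finite"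
  assumes "((\<chi> i. 1) :: real^'p) \<in> span (columns M)"
  shows "0 \<notin> affine hull (range (\<lambda>i. M $ i))"
proof -
  have "span (columns M) \<subseteq> range (\<lambda>x. M *v x)"
  proof (rule span_minimal)
    show "columns M \<subseteq> range (\<lambda>x. M *v x)"
      by (auto simp: columns_def matrix_vector_mult_basis[symmetric])
    show "subspace (range (\<lambda>x. M *v x))"
      using linear_subspace_image[OF matrix_vector_mul_linear subspace_UNIV, of M] by (simp add: image_def)
  qed
  then have "((\<chi> i. 1) :: real^'p) \<in> range (\<lambda>x. M *v x)" using assms by blast
  then obtain x where x: "M *v x = (\<chi> i. 1)" by (metis rangeE)
  have "\<forall>i. x \<bullet> M $ i = 1"
    using x by (simp add: vec_eq_iff matrix_vector_mul_component inner_commute)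
  then have "affine hull (range (\<lambda>i. M $ i)) \<subseteq> {z. x \<bullet> z = 1}"
    by (intro hull_minimal) (auto simp: affine_hyperplane)
  then show ?thesis by auto
qed

lemma affine_bounded_below_const:
  fixes a :: "'a::real_inner"
  assumes A: "affine A" and b: "\<forall>x\<in>A. b < a \<bullet> x" and x: "x \<in> A" and y: "y \<in> A"
  shows "a \<bullet> x = a \<bullet> y"
proof (rule ccontr)
  assume ne: "a \<bullet> x \<noteq> a \<bullet> y"
  define t where "t = (b - a \<bullet> x - 1) / (a \<bullet> y - a \<bullet> x)"
  have "(1 - t) *\<^sub>R x + t *\<^sub>R y \<in> A" by (rule mem_affine[OF A x y]) simp
  then have "b < a \<bullet> ((1 - t) *\<^sub>R x + t *\<^sub>R y)" using b by blast
  moreover have "a \<bullet> ((1 - t) *\<^sub>R x + t *\<^sub>R y) = a \<bullet> x + t * (a \<bullet> y - a \<bullet> x)"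
    by (simp add: inner_add_right algebra_simps)
  moreover have "t * (a \<bullet> y - a \<bullet> x) = b - a \<bullet> x - 1" using ne by (simp add: t_def)
  ultimately show False by simp
qed

lemma ones_span_if:
  fixes M :: "real^'q::finite^'p::finite"
  assumes "0 \<notin> affine hull (range (\<lambda>i. M $ i))"
  shows "((\<chi> i. 1) :: real^'p) \<in> span (columns M)"
proof -
  define A where "A = affine hull (range (\<lambda>i. M $ i))"
  obtain a b where ab: "a \<bullet> 0 < b" "\<forall>x\<in>A. b < a \<bullet> x"
    using separating_hyperplane_closed_point[of A 0] assms
    by (auto simp: A_def affine_imp_convex)
  obtain i0 :: 'p where True by blast
  define c where "c = a \<bullet> M $ i0"
  have i0A: "M $ i0 \<in> A" by (simp add: A_def hull_inc)
  have cb: "b < c" using ab(2) i0A by (simp add: c_def)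
  have c0: "0 < c" using ab(1) cb by simp
  have affA: "affine A" by (simp add: A_def)
  have "\<forall>i. a \<bullet> M $ i = c"
  proof
    fix i
    have "M $ i \<in> A" by (simp add: A_def hull_inc)
    from affine_bounded_below_const[OF affA ab(2) this i0A] show "a \<bullet> M $ i = c" by (simp add: c_def)
  qed
  then have "M *v ((1/c) *\<^sub>R a) = (\<chi> i. 1)"
    using c0 by (simp add: vec_eq_iff matrix_vector_mul_component inner_commute)
  then show ?thesis by (metis matrix_vector_mult_in_columnspace)
qed

lemma FAM2b:
  fixes B :: "'a::real_vector set"
  assumes fin: "finite B" and ind: "independent B"
  obtains v where "v ` {..<card B} = B" "inj_on v {..<card B}"
    "\<And>c. (\<Sum>i<card B. c i *\<^sub>R v i) = 0 \<Longrightarrow> \<forall>i<card B. c i = 0"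
proof -
  obtain h where h: "bij_betw h {0..<card B} B" using ex_bij_betw_nat_finite[OF fin] by blast
  have img: "h`{..<card B} = B" and inj: "inj_on h {..<card B}" using h by (auto simp: bij_betw_def atLeast0LessThan)
  show ?thesis
  proof (rule that[OF img inj])
    fix c assume c: "(\<Sum>i<card B. c i *\<^sub>R h i) = 0"
    define u where "u x = c (the_inv_into {..<card B} h x)" for x
    have uh: "u (h i) = c i" if "i \<in> {..<card B}" for i
      using the_inv_into_f_f[OF inj that] by (simp add: u_def)
    have "(\<Sum>x\<in>B. u x *\<^sub>R x) = (\<Sum>i<card B. u (h i) *\<^sub>R h i)"
      using sum.reindex[OF inj, of "\<lambda>x. u x *\<^sub>R x"] img by (simp add: comp_def)
    also have "\<dots> = (\<Sum>i<card B. c i *\<^sub>R h i)" by (rule sum.cong) (auto simp: uh)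
    finally have "(\<Sum>x\<in>B. u x *\<^sub>R x) = 0" using c by simp
    then have "\<forall>x\<in>B. u x = 0" using real_vector.dependent_finite[OF fin] ind by blast
    then show "\<forall>i<card B. c i = 0" using uh img by force
  qed
qed


lemma construct:
  fixes M :: "real^'q::finite^'p::finite"
  assumes nn: "\<forall>i j. 0 \<le> M $ i $ j"
    and cv: "convex hull (range (\<lambda>i. M $ i)) = {x \<in> affine hull (range (\<lambda>i. M $ i)). \<forall>j\<in>UNIV. 0 \<le> x $ j}"
    and dpos: "aff_dim (range (\<lambda>i. M $ i)) \<ge> 1"
  shows "is_slack_matrix M"
proof -
  define R where "R = range (\<lambda>i. M $ i)"
  obtain i0 :: 'p where True by blast
  define b0 where "b0 = M $ i0"
  have b0R: "b0 \<in> R" by (simp add: R_def b0_def)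
  have b0A: "b0 \<in> affine hull R" using b0R by (simp add: hull_inc)
  define Sp where "Sp = span ((\<lambda>x. - b0 + x) ` R)"
  obtain B where B: "B \<subseteq> Sp" "independent B" "Sp \<subseteq> span B" "card B = dim Sp"
    using basis_exists[of Sp] by blast
  have finB: "finite B" using B(2) by (rule finiteI_independent)
  define D where "D = card B"
  have spB: "span B = Sp"
  proof
    show "span B \<subseteq> Sp" using B(1) by (simp add: Sp_def span_minimal)
  qed (rule B(3))
  have dD: "aff_dim R = int D"
  proof -
    have "aff_dim R = int (dim ((+) (- b0) ` R))" by (rule aff_dim_eq_dim[OF b0A])
    also have "dim ((+) (- b0) ` R) = dim Sp" unfolding Sp_def by (simp add: dim_span)
    finally show ?thesis using B(4) by (simp add: D_def)
  qed
  have D1: "D \<ge> 1" using dpos dD by (simp add: R_def)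
  obtain v where v: "v ` {..<D} = B" "inj_on v {..<D}" "\<And>c. (\<Sum>i<D. c i *\<^sub>R v i) = 0 \<Longrightarrow> \<forall>i<D. c i = 0"
    using FAM2b[OF finB B(2)] unfolding D_def by metis
  have coef_ex: "\<exists>c. M $ i = b0 + (\<Sum>k<D. c k *\<^sub>R v k)" for i
  proof -
    have "- b0 + M $ i \<in> Sp" unfolding Sp_def by (rule span_base) (simp add: R_def)
    then have "- b0 + M $ i \<in> span (v`{..<D})" using spB v(1) by simp
    then obtain u where u: "- b0 + M $ i = (\<Sum>x\<in>v`{..<D}. u x *\<^sub>R x)"
      using span_finite[of "v`{..<D}"] by auto
    also have "\<dots> = (\<Sum>k<D. u (v k) *\<^sub>R v k)"
      using sum.reindex[OF v(2), of "\<lambda>x. u x *\<^sub>R x"] by (simp add: comp_def)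
    finally have "M $ i = b0 + (\<Sum>k<D. u (v k) *\<^sub>R v k)" by (simp add: algebra_simps)
    then show ?thesis by (intro exI[where x="\<lambda>k. u (v k)"])
  qed
  define cf where "cf i = (SOME c. M $ i = b0 + (\<Sum>k<D. c k *\<^sub>R v k))" for i
  have cf: "M $ i = b0 + (\<Sum>k<D. cf i k *\<^sub>R v k)" for i
    unfolding cf_def by (rule someI_ex[OF coef_ex])
  define V where "V i k = (if k < D then cf i k else 0)" for i k
  define W where "W j k = - (v k $ j)" for j k
  define w where "w j = b0 $ j" for j
  define psi where "psi x = b0 + (\<Sum>k<D. x k *\<^sub>R v k)" for x :: "nat \<Rightarrow> real"
  have psiV: "psi (V i) = M $ i" for i
    using cf[of i] by (simp add: psi_def V_def)
  have psi_comp: "psi x $ j = w j - (\<Sum>k<D. W j k * x k)" for x j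
    by (simp add: psi_def W_def w_def mult.commute sum_negf)
  have psi_lin: "psi x = (\<Sum>i\<in>UNIV. l i *\<^sub>R psi (y i))"
    if hx: "\<forall>k<D. x k = (\<Sum>i\<in>UNIV. l i * y i k)" and hl: "(\<Sum>i\<in>UNIV. l i) = 1" for x l and y :: "'p \<Rightarrow> nat \<Rightarrow> real"
  proof -
    have "psi x $ j = (\<Sum>i\<in>UNIV. l i *\<^sub>R psi (y i)) $ j" for j
    proof -
      have "(\<Sum>k<D. W j k * x k) = (\<Sum>k<D. \<Sum>i\<in>UNIV. l i * (W j k * y i k))"
        using hx by (simp add: sum_distrib_left mult.left_commute)
      also have "\<dots> = (\<Sum>i\<in>UNIV. l i * (\<Sum>k<D. W j k * y i k))"
        by (subst sum.swap) (simp add: sum_distrib_left)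
      finally have e: "(\<Sum>k<D. W j k * x k) = (\<Sum>i\<in>UNIV. l i * (\<Sum>k<D. W j k * y i k))" .
      have "(\<Sum>i\<in>UNIV. l i *\<^sub>R psi (y i)) $ j = (\<Sum>i\<in>UNIV. l i * (w j - (\<Sum>k<D. W j k * y i k)))"
        by (simp add: psi_comp)
      also have "\<dots> = (\<Sum>i\<in>UNIV. l i) * w j - (\<Sum>i\<in>UNIV. l i * (\<Sum>k<D. W j k * y i k))"
        by (simp add: right_diff_distrib sum_subtractf sum_distrib_right)
      finally show ?thesis using e hl by (simp add: psi_comp)
    qed
    then show ?thesis by (simp add: vec_eq_iff)
  qed
  have psi_inj: "x k = x' k" if "psi x = psi x'" "k < D" for x x' k
  proof -
    have "(\<Sum>k<D. (x k - x' k) *\<^sub>R v k) = psi x - psi x'"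
      by (simp add: psi_def scaleR_diff_left sum_subtractf)
    then have "\<forall>k<D. x k - x' k = 0" using that(1) by (intro v(3)) simp
    then show ?thesis using that(2) by simp
  qed
  have eqPI: "conv_rows D V = ineq_set D W w"
  proof (intro set_eqI iffI)
    fix x assume "x \<in> conv_rows D V"
    then obtain l :: "'p \<Rightarrow> real" where x: "x \<in> Rn D" "\<forall>i. l i \<ge> 0" "(\<Sum>i\<in>UNIV. l i) = 1"
      "\<forall>k<D. x k = (\<Sum>i\<in>UNIV. l i * V i k)" by (auto simp: conv_rows_def)
    have "psi x = (\<Sum>i\<in>UNIV. l i *\<^sub>R M $ i)" using psi_lin[OF x(4) x(3)] by (simp add: psiV)
    then have "0 \<le> psi x $ j" for j using x(2) nn by (simp add: sum_nonneg)
    then show "x \<in> ineq_set D W w" using x(1) by (simp add: ineq_set_def psi_comp)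
  next
    fix x assume "x \<in> ineq_set D W w"
    then have xR: "x \<in> Rn D" and xW: "\<forall>j. (\<Sum>k<D. W j k * x k) \<le> w j" by (auto simp: ineq_set_def)
    have nnp: "\<forall>j\<in>UNIV. 0 \<le> psi x $ j" using xW by (simp add: psi_comp)
    have "(\<Sum>k<D. x k *\<^sub>R v k) \<in> span B"
      by (rule span_sum, rule span_scale, rule span_base) (use v(1) in auto)
    then have "(\<Sum>k<D. x k *\<^sub>R v k) \<in> Sp" using spB by simp
    moreover have "affine hull R = (\<lambda>x. b0 + x) ` Sp"
      using affine_hull_insert_span_gen[of b0 R] b0R by (simp add: Sp_def insert_absorb)
    ultimately have "psi x \<in> affine hull R" by (simp add: psi_def)
    then have "psi x \<in> convex hull R" using cv nnp by (simp add: R_def)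
    then obtain l where l: "\<forall>i\<in>UNIV. 0 \<le> l i" "sum l UNIV = 1" "(\<Sum>i\<in>UNIV. l i *\<^sub>R M $ i) = psi x"
      unfolding R_def conv_idx[OF finite_class.finite_UNIV] by blast
    define x' where "x' k = (\<Sum>i\<in>UNIV. l i * V i k)" for k
    have "psi x' = (\<Sum>i\<in>UNIV. l i *\<^sub>R M $ i)" using psi_lin[of x' l V] l(2) by (simp add: x'_def psiV)
    then have "psi x' = psi x" using l(3) by simp
    then have "\<forall>k<D. x k = (\<Sum>i\<in>UNIV. l i * V i k)" using psi_inj by (metis x'_def)
    then show "x \<in> conv_rows D V" using xR l(1,2) unfolding conv_rows_def by blast
  qed
  have Sd: "\<forall>i j. M $ i $ j = w j - (\<Sum>k<D. W j k * V i k)"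
    using psiV psi_comp by metis
  interpret slk D V W w M by unfold_locales (use eqPI Sd in auto)
  have "set_dim D (conv_rows D V) = nat (aff_dim R)" using T3 by (simp add: P_def rowsS_def R_def)
  then have sd: "set_dim D (conv_rows D V) \<ge> 1" using dD D1 by simp
  have "slack_matrix_of D (conv_rows D V) M"
    unfolding slack_matrix_of_def using sd eqPI Sd by blast
  then show ?thesis unfolding is_slack_matrix_def by blast
qed


theorem theorem4p1:
  fixes M :: "real^'q^'p"
  assumes "\<forall>i j. M $ i $ j \<ge> 0"
    and "rank M \<ge> 2"
  shows "is_slack_matrix M \<longleftrightarrow>
           (is_incidence_matrix_dim (rank M - 1) (inc_mat M) \<and>
            ((\<chi> i. 1) :: real^'p) \<in> span (columns M))"
proof
  assume "is_slack_matrix M"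
  then obtain n P where sm: "slack_matrix_of n P M" by (auto simp: is_slack_matrix_def)
  then obtain V W w where sd: "set_dim n P \<ge> 1" "P = conv_rows n V" "P = ineq_set n W w"
      "\<forall>i j. M $ i $ j = w j - (\<Sum>k<n. W j k * V i k)"
    unfolding slack_matrix_of_def by blast
  interpret slk n V W w M by unfold_locales (use sd in auto)
  have T: "set_dim n P = nat (aff_dim rowsS)" using T3 sd(2) by (simp add: P_def)
  then have d1: "aff_dim rowsS \<ge> 1" using sd(1) by linarith
  have z: "0 \<notin> affine hull (range (\<lambda>i. M $ i))" using H0[OF d1] by (simp add: rowsS_def)
  have rk: "int (rank M) = aff_dim rowsS + 1" using rank_aff[OF z] by (simp add: rowsS_def)
  have "set_dim n P = rank M - 1" using T rk d1 by linarith
  then have "is_incidence_matrix_dim (rank M - 1) (inc_mat M)"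
    unfolding is_incidence_matrix_dim_def using sm by blast
  moreover have "((\<chi> i. 1) :: real^'p) \<in> span (columns M)" by (rule ones_span_if[OF z])
  ultimately show "is_incidence_matrix_dim (rank M - 1) (inc_mat M) \<and> ((\<chi> i. 1) :: real^'p) \<in> span (columns M)"
    by blast
next
  assume "is_incidence_matrix_dim (rank M - 1) (inc_mat M) \<and> ((\<chi> i. 1) :: real^'p) \<in> span (columns M)"
  then have inc: "is_incidence_matrix_dim (rank M - 1) (inc_mat M)"
    and ones: "((\<chi> i. 1) :: real^'p) \<in> span (columns M)" by auto
  obtain n P S where sm: "slack_matrix_of n P S" and sdP: "set_dim n P = rank M - 1"
      and ie: "inc_mat M = inc_mat S"
    using inc unfolding is_incidence_matrix_dim_def by blast
  then obtain V W w where sd: "set_dim n P \<ge> 1" "P = conv_rows n V" "P = ineq_set n W w"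
      "\<forall>i j. S $ i $ j = w j - (\<Sum>k<n. W j k * V i k)"
    unfolding slack_matrix_of_def by blast
  interpret slk n V W w S by unfold_locales (use sd in auto)
  have T: "set_dim n P = nat (aff_dim rowsS)" using T3 sd(2) by (simp add: P_def)
  have z: "0 \<notin> affine hull (range (\<lambda>i. M $ i))" by (rule ones_span_imp[OF ones])
  have rk: "int (rank M) = aff_dim (range (\<lambda>i. M $ i)) + 1" by (rule rank_aff[OF z])
  have sne: "aff_dim rowsS \<ge> 0" using aff_dim_negative_iff[of rowsS] rowsS_ne by linarith
  have dS: "aff_dim rowsS = int (rank M) - 1" using T sdP sne assms(2) by linarith
  have dM: "aff_dim (range (\<lambda>i. M $ i)) = int (rank M) - 1" using rk by simp
  have patt: "M $ i $ j = 0 \<longleftrightarrow> S $ i $ j = 0" for i j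
  proof -
    have "inc_mat M $ i $ j = inc_mat S $ i $ j" using ie by simp
    then show ?thesis by (simp add: inc_mat_def split: if_splits)
  qed
  have h: "hypC UNIV UNIV (\<lambda>i. M $ i) (\<lambda>i. S $ i)"
    unfolding hypC_def using assms(1) T1 patt dS dM T2 by (simp add: rowsS_def)
  have "convex hull (range (\<lambda>i. M $ i)) = {x \<in> affine hull (range (\<lambda>i. M $ i)). \<forall>j\<in>UNIV. 0 \<le> x $ j}"
    using core[OF h] unfolding conclC_def by blast
  moreover have "aff_dim (range (\<lambda>i. M $ i)) \<ge> 1" using dM assms(2) by linarith
  ultimately show "is_slack_matrix M" by (rule construct[OF assms(1)])
qed

end
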